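(* Let $M\in\mathbb Z$, $s\in\{0,\dots,NL-1\}$ with $M\equiv s\pmod{NL}$, $0\le d\le l$, $n=s+lNL$, and let $m\in\mathbb Z$ be defined by $M-s-lNL=-mNL$ (so $\underline{o_{n+1}}=\cdots=\underline{o_{n+NL}}=m$). Let $1\le b\le L$ and $1\le c\le N$. Define subspaces of $\mathbb K[z_1^{\pm1},\dots,z_{n+bc}^{\pm1}]\otimes(\mathbb K^L)^{\otimes(n+bc)}$: $\mathcal K=\mathrm{span}\{z_1^{m'_1}\cdots z_{n+bc}^{m'_{n+bc}}\otimes\mathfrak e:\ \mathfrak e\in(\mathbb K^L)^{\otimes(n+bc)},\ m'_i\le m\ \forall i,\ \#\{i: m'_i=m\}<bc\}$, $\mathcal L=\mathrm{span}\{z_1^{m'_1}\cdots z_{n+bc}^{m'_{n+bc}}\otimes\mathfrak e_{b_1}\otimes\cdots\otimes\mathfrak e_{b_{n+bc}}:\ m'_1,\dots,m'_n<m,\ m'_{n+1}=\cdots=m'_{n+bc}=m,\ \exists j<b\text{ with }\#\{1\le i\le bc: b_{n+i}=j\}>c\}$. Let $y=y^{(n)}\otimes\mathfrak v_{\epsilon_1}\otimes\cdots\otimes\mathfrak v_{\epsilon_{bc}}\in(\mathbb K^N)^{\otimes n}\otimes(\mathbb K^N)^{\otimes bc}$ with $N-c+1\le\epsilon_i\le N$ for all $i$. Then for $f_1\in\mathcal K$ and $f_2\in\mathcal L$: (i) $\wedge(f_1\otimes y)\in\bigoplus_{d'>l}V^{d'}_{M,n+bc}$; (ii) $\wedge(f_2\otimes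 y)=0$.
   Context: Let $N,L\ge 1$ be integers, $q$ an indeterminate and $\mathbb K=\mathbb Q(q^{1/(2N)})$. Let $\mathbb K^L$ have basis $\mathfrak e_1,\dots,\mathfrak e_L$, $\mathbb K^N$ have basis $\mathfrak v_1,\dots,\mathfrak v_N$, and $V_{\mathrm{aff}}=\mathbb K[z^{\pm1}]\otimes\mathbb K^L\otimes\mathbb K^N$. Identify $V_{\mathrm{aff}}^{\otimes r}=\mathbb K[z_1^{\pm1},\dots,z_r^{\pm1}]\otimes(\mathbb K^L)^{\otimes r}\otimes(\mathbb K^N)^{\otimes r}$ (the $z$ of the $i$th factor becomes $z_i$). With $E_{a,b}$ the matrix units of $\mathbb K^L$ put $R(z_1,z_2)=(q^2z_1-z_2)\sum_{a}E_{a,a}\otimes E_{a,a}+q(z_1-z_2)\sum_{a\neq b}E_{a,a}\otimes E_{b,b}+z_1(q^2-1)\sum_{a<b}E_{a,b}\otimes E_{b,a}+z_2(q^2-1)\sum_{a>b}E_{a,b}\otimes E_{b,a}$, $s$ the exchange of the two factors of $(\mathbb K[z^{\pm1}]\otimes\mathbb K^L)^{\otimes 2}$, $\overset{c}{T}=\frac{z_1-q^2z_2}{z_1-z_2}\bigl(1-s\cdot\frac{R(z_1,z_2)}{q^2z_1-z_2}\bigr)-1$, and $\overset{s}{T}$ on $(\mathbb K^N)^{\otimes 2}$: $\mathfrak v_{\epsilon_1}\otimes\mathfrak v_{\epsilon_2}\mapsto q^2\mathfrak v_{\epsilon_1}\otimes\mathfrak v_{\epsilon_2}$ if $\epsilon_1=\epsilon_2$,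 $q\,\mathfrak v_{\epsilon_2}\otimes\mathfrak v_{\epsilon_1}$ if $\epsilon_1<\epsilon_2$, $q\,\mathfrak v_{\epsilon_2}\otimes\mathfrak v_{\epsilon_1}+(q^2-1)\mathfrak v_{\epsilon_1}\otimes\mathfrak v_{\epsilon_2}$ if $\epsilon_1>\epsilon_2$; $\overset{c}{T}_i,\overset{s}{T}_i$ act in factors $i,i+1$. $\wedge^rV_{\mathrm{aff}}=V_{\mathrm{aff}}^{\otimes r}/\sum_{i}\mathrm{Im}(\overset{c}{T}_i-\overset{s}{T}_i)$ with quotient map $\wedge$. Write $k=\bar k-N(\dot k+L\underline k)$ ($\bar k\in\{1..N\}$, $\dot k\in\{1..L\}$, $\underline k\in\mathbb Z$), $u_k=z^{\underline k}\mathfrak e_{\dot k}\mathfrak v_{\bar k}$; $u_{k_1}\wedge\cdots\wedge u_{k_r}$ is the image of $u_{k_1}\otimes\cdots\otimes u_{k_r}$, normally ordered if $k_1>\cdots>k_r$ (these form a basis of $\wedge^rV_{\mathrm{aff}}$). Gradings: let $o_i=M-i+1$ ($i\ge1$). For $r\ge0$, $V_{M,r}\subset\wedge^rV_{\mathrm{aff}}$ is the span of the normally ordered $u_{k_1}\wedge\cdots\wedge u_{k_r}$ with $\underline{k_r}\le\underline{o_r}$, graded by $\deg=\sum_{i=1}^r(\underline{o_i}-\underline{k_i})$; $V^d_{M,r}$ is its degree-$d$ component. *)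

theory Defs
  imports "HOL-Computational_Algebra.Polynomial" "HOL-Computational_Algebra.Fraction_Field"
          "HOL-Library.Function_Algebras"
begin

section \<open>The ground field K = Q(t), t = q^(1/(2N)), q = t^(2N)\<close>

type_synonym K = "rat poly fract"

definition tq :: K where "tq = Fract [:0, 1:] 1"

definition qK :: "nat \<Rightarrow> K" where "qK N = tq ^ (2 * N)"

text \<open>A basis word of V_aff^{(x)r} is a list of r triples (exponent, L-index, N-index),
  standing for z_1^{m_1}...z_r^{m_r} (x) e_{b_1}(x)...(x)e_{b_r} (x) v_{e_1}(x)...(x)v_{e_r}.\<close>

type_synonym word = "(int \<times> nat \<times> nat) list"
type_synonym tens = "word \<Rightarrow> K"

definition delta :: "'a \<Rightarrow> 'a \<Rightarrow> K" where
  "delta w = (\<lambda>v. if v = w then 1 else 0)"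

definition sc :: "K \<Rightarrow> ('a \<Rightarrow> K) \<Rightarrow> ('a \<Rightarrow> K)" where
  "sc c f = (\<lambda>v. c * f v)"

definition fspan :: "('a \<Rightarrow> K) set \<Rightarrow> ('a \<Rightarrow> K) set" where
  "fspan S = {f. \<exists>A c. finite A \<and> A \<subseteq> S \<and> f = (\<Sum>g\<in>A. sc (c g) g)}"

text \<open>Linear extension of a map given on basis words (for finitely supported f).\<close>
definition lin_ext :: "(word \<Rightarrow> tens) \<Rightarrow> tens \<Rightarrow> tens" where
  "lin_ext g f = (\<lambda>v. \<Sum>w\<in>{w. f w \<noteq> 0}. f w * g w v)"

definition valid_word :: "nat \<Rightarrow> nat \<Rightarrow> nat \<Rightarrow> word \<Rightarrow> bool" where
  "valid_word N L r w \<longleftrightarrow> length w = r \<and>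
     (\<forall>(m, b, e)\<in>set w. 1 \<le> b \<and> b \<le> L \<and> 1 \<le> e \<and> e \<le> N)"

definition tens_space :: "nat \<Rightarrow> nat \<Rightarrow> nat \<Rightarrow> tens set" where
  "tens_space N L r = {f. finite {w. f w \<noteq> 0} \<and> (\<forall>w. f w \<noteq> 0 \<longrightarrow> valid_word N L r w)}"

section \<open>Operators acting in (0-based) list positions p, p+1\<close>

definition zsh :: "nat \<Rightarrow> word \<Rightarrow> word" where
  "zsh p w = (case w ! p of (m, b, e) \<Rightarrow> w[p := (m + 1, b, e)])"

definition Zop :: "nat \<Rightarrow> tens \<Rightarrow> tens" where
  "Zop p = lin_ext (\<lambda>w. delta (zsh p w))"

text \<open>exchange s of the two factors of (K[z] (x) K^L)^(x)2 (the K^N parts stay)\<close>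
definition swapc :: "nat \<Rightarrow> word \<Rightarrow> word" where
  "swapc p w = (case w ! p of (m1, b1, e1) \<Rightarrow> case w ! Suc p of (m2, b2, e2) \<Rightarrow>
      w[p := (m2, b2, e1), Suc p := (m1, b1, e2)])"

definition Sop :: "nat \<Rightarrow> tens \<Rightarrow> tens" where
  "Sop p = lin_ext (\<lambda>w. delta (swapc p w))"

definition swapL :: "nat \<Rightarrow> word \<Rightarrow> word" where
  "swapL p w = (case w ! p of (m1, b1, e1) \<Rightarrow> case w ! Suc p of (m2, b2, e2) \<Rightarrow>
      w[p := (m1, b2, e1), Suc p := (m2, b1, e2)])"

definition swapN :: "nat \<Rightarrow> word \<Rightarrow> word" where
  "swapN p w = (case w ! p of (m1, b1, e1) \<Rightarrow> case w ! Suc p of (m2, b2, e2) \<Rightarrow>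
      w[p := (m1, b1, e2), Suc p := (m2, b2, e1)])"

definition Rop :: "nat \<Rightarrow> nat \<Rightarrow> tens \<Rightarrow> tens" where
  "Rop N p = lin_ext (\<lambda>w. (let b1 = fst (snd (w ! p)); b2 = fst (snd (w ! Suc p)); q = qK N in
     if b1 = b2 then sc (q^2) (delta (zsh p w)) - delta (zsh (Suc p) w)
     else sc q (delta (zsh p w) - delta (zsh (Suc p) w))
          + sc (q^2 - 1) (delta (zsh (if b1 > b2 then p else Suc p) (swapL p w)))))"

text \<open>y = T^c_(p+1) x.  Since T^c + 1 = ((z_1 - q^2 z_2) x + s(R x)) / (z_1 - z_2),
  this is characterised by (z_1 - z_2)(y + x) = (z_1 - q^2 z_2) x + s(R x).\<close>
definition is_Tc :: "nat \<Rightarrow> nat \<Rightarrow> tens \<Rightarrow> tens \<Rightarrow> bool" where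
  "is_Tc N p x y \<longleftrightarrow>
     Zop p (y + x) - Zop (Suc p) (y + x) = Zop p x - sc ((qK N)^2) (Zop (Suc p) x) + Sop p (Rop N p x)"

definition Tsop :: "nat \<Rightarrow> nat \<Rightarrow> tens \<Rightarrow> tens" where
  "Tsop N p = lin_ext (\<lambda>w. (let e1 = snd (snd (w ! p)); e2 = snd (snd (w ! Suc p)); q = qK N in
     if e1 = e2 then sc (q^2) (delta w)
     else if e1 < e2 then sc q (delta (swapN p w))
     else sc q (delta (swapN p w)) + sc (q^2 - 1) (delta w)))"

text \<open>The subspace sum_i Im(T^c_i - T^s_i) of V_aff^{(x)r}; wedge(x) = wedge(x') iff x - x' lies in it.\<close>
definition rel_space :: "nat \<Rightarrow> nat \<Rightarrow> nat \<Rightarrow> tens set" where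
  "rel_space N L r = fspan {y - Tsop N p x | p x y. Suc p < r \<and>
       x \<in> tens_space N L r \<and> y \<in> tens_space N L r \<and> is_Tc N p x y}"

text \<open>The word entry (m,b,e) is u_k with k = e - N(b + L m), underline k = m, dot k = b, bar k = e.\<close>
definition kidx :: "nat \<Rightarrow> nat \<Rightarrow> int \<times> nat \<times> nat \<Rightarrow> int" where
  "kidx N L x = (case x of (m, b, e) \<Rightarrow> int e - int N * (int b + int L * m))"

definition kbar :: "nat \<Rightarrow> int \<Rightarrow> int" where
  "kbar N k = (k - 1) mod int N + 1"

definition kdot :: "nat \<Rightarrow> nat \<Rightarrow> int \<Rightarrow> int" where
  "kdot N L k = ((kbar N k - k) div int N - 1) mod int L + 1"

definition kunder :: "nat \<Rightarrow> nat \<Rightarrow> int \<Rightarrow> int" where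
  "kunder N L k = ((kbar N k - k) div int N - kdot N L k) div int L"

definition oo :: "int \<Rightarrow> nat \<Rightarrow> int" where
  "oo M i = M - int i + 1"

definition deg_word :: "nat \<Rightarrow> nat \<Rightarrow> int \<Rightarrow> word \<Rightarrow> int" where
  "deg_word N L M w = (\<Sum>i<length w. kunder N L (oo M (Suc i)) - fst (w ! i))"

text \<open>normally ordered words u_{k_1} (x) ... (x) u_{k_r} with k_1 > ... > k_r and
  underline k_r <= underline o_r (i.e. basis elements of V_{M,r})\<close>
definition VMr_word :: "nat \<Rightarrow> nat \<Rightarrow> int \<Rightarrow> nat \<Rightarrow> word \<Rightarrow> bool" where
  "VMr_word N L M r w \<longleftrightarrow> valid_word N L r w \<and>
     (\<forall>i j. i < j \<and> j < r \<longrightarrow> kidx N L (w ! i) > kidx N L (w ! j)) \<and>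
     (0 < r \<longrightarrow> fst (w ! (r - 1)) \<le> kunder N L (oo M r))"

definition wedge_in_high_deg :: "nat \<Rightarrow> nat \<Rightarrow> int \<Rightarrow> nat \<Rightarrow> nat \<Rightarrow> tens \<Rightarrow> bool" where
  "wedge_in_high_deg N L M r l x \<longleftrightarrow>
     (\<exists>g \<in> fspan {delta w | w. VMr_word N L M r w \<and> int l < deg_word N L M w}.
        x - g \<in> rel_space N L r)"

text \<open>Elements of K[z_1^{+-1},...,z_r^{+-1}] (x) (K^L)^{(x)r}: functions on lists of
  (exponent, L-index); elements of (K^N)^{(x)r}: functions on lists of N-indices.\<close>

definition Ltens :: "nat \<Rightarrow> nat \<Rightarrow> (nat list \<Rightarrow> K) set" where
  "Ltens L r = {E. \<forall>bs. E bs \<noteq> 0 \<longrightarrow> length bs = r \<and> (\<forall>x\<in>set bs. 1 \<le> x \<and> x \<le> L)}"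

definition Ntens :: "nat \<Rightarrow> nat \<Rightarrow> (nat list \<Rightarrow> K) set" where
  "Ntens N r = {E. \<forall>es. E es \<noteq> 0 \<longrightarrow> length es = r \<and> (\<forall>x\<in>set es. 1 \<le> x \<and> x \<le> N)}"

definition calK :: "nat \<Rightarrow> nat \<Rightarrow> int \<Rightarrow> nat \<Rightarrow> nat \<Rightarrow> ((int \<times> nat) list \<Rightarrow> K) set" where
  "calK L n m b c = fspan {(\<lambda>u. if map fst u = ms then E (map snd u) else 0) | ms E.
      length ms = n + b * c \<and> E \<in> Ltens L (n + b * c) \<and> (\<forall>x\<in>set ms. x \<le> m) \<and>
      card {i. i < n + b * c \<and> ms ! i = m} < b * c}"

definition calL :: "nat \<Rightarrow> nat \<Rightarrow> int \<Rightarrow> nat \<Rightarrow> nat \<Rightarrow> ((int \<times> nat) list \<Rightarrow> K) set" where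
  "calL L n m b c = fspan {delta u | u. length u = n + b * c \<and>
      (\<forall>x\<in>set u. 1 \<le> snd x \<and> snd x \<le> L) \<and>
      (\<forall>i < n. fst (u ! i) < m) \<and> (\<forall>i. n \<le> i \<and> i < n + b * c \<longrightarrow> fst (u ! i) = m) \<and>
      (\<exists>j < b. c < card {i. 1 \<le> i \<and> i \<le> b * c \<and> snd (u ! (n + i - 1)) = j})}"

definition tprod :: "((int \<times> nat) list \<Rightarrow> K) \<Rightarrow> (nat list \<Rightarrow> K) \<Rightarrow> tens" where
  "tprod f y = (\<lambda>w. f (map (\<lambda>(m, b, e). (m, b)) w) * y (map (\<lambda>(m, b, e). e) w))"

definition ytens :: "nat \<Rightarrow> (nat list \<Rightarrow> K) \<Rightarrow> nat list \<Rightarrow> (nat list \<Rightarrow> K)" where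
  "ytens n yn eps = (\<lambda>es. if length es = n + length eps \<and> drop n es = eps then yn (take n es) else 0)"

end

theory Submission
  imports Defs
begin


lemma sum_fun_apply: "(sum F A) x = (\<Sum>a\<in>A. F a x)"
  by (induction A rule: infinite_finite_induct) auto

lemma sc_apply[simp]: "sc c f v = c * f v" by (simp add: sc_def)
lemma delta_apply: "delta w v = (if v = w then 1 else 0)" by (simp add: delta_def)

lemma fspan_zero: "0 \<in> fspan S"
  unfolding fspan_def by (rule CollectI, rule exI[of _ "{}"]) auto

lemma fspan_base: "g \<in> S \<Longrightarrow> g \<in> fspan S"
  unfolding fspan_def
  by (rule CollectI, rule exI[of _ "{g}"], rule exI[of _ "\<lambda>_. 1"]) (auto simp: sc_def)

lemma fspan_add: assumes "f \<in> fspan S" "g \<in> fspan S" shows "f + g \<in> fspan S"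
proof -
  obtain A c where A: "finite A" "A \<subseteq> S" "f = (\<Sum>h\<in>A. sc (c h) h)" using assms(1) unfolding fspan_def by blast
  obtain B d where B: "finite B" "B \<subseteq> S" "g = (\<Sum>h\<in>B. sc (d h) h)" using assms(2) unfolding fspan_def by blast
  define e where "e h = (if h \<in> A then c h else 0) + (if h \<in> B then d h else 0)" for h
  have "f + g = (\<Sum>h\<in>A \<union> B. sc (e h) h)"
  proof
    fix v
    have 1: "f v = (\<Sum>h\<in>A \<union> B. (if h \<in> A then c h else 0) * h v)"
    proof -
      have "(\<Sum>h\<in>A \<union> B. (if h \<in> A then c h else 0) * h v) = (\<Sum>h\<in>A. (if h \<in> A then c h else 0) * h v)"
        by (rule sum.mono_neutral_right) (use A(1) B(1) in auto)
      then show ?thesis unfolding A(3) sum_fun_apply by simp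
    qed
    have 2: "g v = (\<Sum>h\<in>A \<union> B. (if h \<in> B then d h else 0) * h v)"
    proof -
      have "(\<Sum>h\<in>A \<union> B. (if h \<in> B then d h else 0) * h v) = (\<Sum>h\<in>B. (if h \<in> B then d h else 0) * h v)"
        by (rule sum.mono_neutral_right) (use A(1) B(1) in auto)
      then show ?thesis unfolding B(3) sum_fun_apply by simp
    qed
    show "(f + g) v = (\<Sum>h\<in>A \<union> B. sc (e h) h) v"
      unfolding sum_fun_apply plus_fun_def 1 2 e_def
      by (simp add: sum.distrib[symmetric] distrib_right)
  qed
  then show ?thesis unfolding fspan_def using A B by blast
qed

lemma fspan_sc: assumes "f \<in> fspan S" shows "sc k f \<in> fspan S"
proof -
  obtain A c where A: "finite A" "A \<subseteq> S" "f = (\<Sum>h\<in>A. sc (c h) h)" using assms(1) unfolding fspan_def by blast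
  have "sc k f = (\<Sum>h\<in>A. sc (k * c h) h)"
  proof
    fix v
    have "sc k f v = k * (\<Sum>h\<in>A. c h * h v)" unfolding A(3) sum_fun_apply by simp
    also have "\<dots> = (\<Sum>h\<in>A. (k * c h) * h v)" by (simp add: sum_distrib_left mult.assoc)
    finally show "sc k f v = (\<Sum>h\<in>A. sc (k * c h) h) v" unfolding sum_fun_apply by simp
  qed
  then show ?thesis unfolding fspan_def
    by (intro CollectI exI[of _ A] exI[of _ "\<lambda>h. k * c h"]) (use A in auto)
qed

lemma fspan_uminus: "f \<in> fspan S \<Longrightarrow> - f \<in> fspan S"
  using fspan_sc[of f S "-1"] by (simp add: sc_def fun_Compl_def) 

lemma fspan_diff: "f \<in> fspan S \<Longrightarrow> g \<in> fspan S \<Longrightarrow> f - g \<in> fspan S"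
  using fspan_add[of f S "-g"] fspan_uminus[of g S] by simp

lemma fspan_sum: "finite I \<Longrightarrow> (\<And>i. i \<in> I \<Longrightarrow> F i \<in> fspan S) \<Longrightarrow> sum F I \<in> fspan S"
  by (induction I rule: finite_induct) (auto intro: fspan_zero fspan_add)

lemma fspan_mono: "S \<subseteq> T \<Longrightarrow> fspan S \<subseteq> fspan T"
  unfolding fspan_def by blast

lemma fspan_fspan: assumes "S \<subseteq> fspan T" shows "fspan S \<subseteq> fspan T"
proof
  fix f assume "f \<in> fspan S"
  then obtain A c where A: "finite A" "A \<subseteq> S" "f = (\<Sum>h\<in>A. sc (c h) h)" unfolding fspan_def by blast
  show "f \<in> fspan T" unfolding A(3) using A(1,2) assms by (intro fspan_sum fspan_sc) auto
qed


lemma tq_pos: "0 < tq"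
proof -
  have "0 < ([:0, 1:] :: rat poly)" by (simp add: less_poly_def pos_poly_pCons)
  then show ?thesis unfolding tq_def by (subst zero_less_Fract_iff) auto
qed
lemma q_pos: "0 < qK N" unfolding qK_def using tq_pos by simp
lemma q_nz: "qK N \<noteq> 0" using q_pos[of N] by simp
lemma q2_nz: "1 + (qK N)^2 \<noteq> 0"
proof -
  have "0 < 1 + (qK N)^2" by (intro add_pos_nonneg) auto
  then show ?thesis by simp
qed


definition supp :: "('a \<Rightarrow> K) \<Rightarrow> 'a set" where "supp f = {w. f w \<noteq> 0}"

lemma lin_ext_finite:
  assumes "finite B" "supp f \<subseteq> B"
  shows "lin_ext g f v = (\<Sum>w\<in>B. f w * g w v)"
  unfolding lin_ext_def
  by (rule sum.mono_neutral_left) (use assms in \<open>auto simp: supp_def\<close>)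

lemma lin_ext_delta[simp]: "lin_ext g (delta w) = g w"
proof
  fix v
  have "lin_ext g (delta w) v = (\<Sum>u\<in>{w}. delta w u * g u v)"
    by (rule lin_ext_finite) (auto simp: supp_def delta_def)
  then show "lin_ext g (delta w) v = g w v" by (simp add: delta_def)
qed

lemma supp_add: "supp (f + g) \<subseteq> supp f \<union> supp g" by (auto simp: supp_def)
lemma supp_diff: "supp (f - g) \<subseteq> supp f \<union> supp g" by (auto simp: supp_def)
lemma supp_sc: "supp (sc k f) \<subseteq> supp f" by (auto simp: supp_def)
lemma supp_delta: "supp (delta w) = {w}" by (auto simp: supp_def delta_def)

lemma lin_ext_add:
  assumes "finite (supp f)" "finite (supp h)"
  shows "lin_ext g (f + h) = lin_ext g f + lin_ext g h"
proof
  fix v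
  let ?B = "supp f \<union> supp h"
  have "lin_ext g (f + h) v = (\<Sum>w\<in>?B. (f + h) w * g w v)"
    by (rule lin_ext_finite) (use assms supp_add[of f h] in auto)
  moreover have "lin_ext g f v = (\<Sum>w\<in>?B. f w * g w v)"
    by (rule lin_ext_finite) (use assms in auto)
  moreover have "lin_ext g h v = (\<Sum>w\<in>?B. h w * g w v)"
    by (rule lin_ext_finite) (use assms in auto)
  ultimately show "lin_ext g (f + h) v = (lin_ext g f + lin_ext g h) v"
    by (simp add: sum.distrib distrib_right)
qed

lemma lin_ext_sc:
  assumes "finite (supp f)"
  shows "lin_ext g (sc k f) = sc k (lin_ext g f)"
proof
  fix v
  have "lin_ext g (sc k f) v = (\<Sum>w\<in>supp f. (sc k f) w * g w v)"
    by (rule lin_ext_finite) (use assms supp_sc[of k f] in auto)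
  moreover have "lin_ext g f v = (\<Sum>w\<in>supp f. f w * g w v)"
    by (rule lin_ext_finite) (use assms in auto)
  ultimately show "lin_ext g (sc k f) v = sc k (lin_ext g f) v"
    by (simp add: sum_distrib_left mult.assoc)
qed

lemma lin_ext_diff:
  assumes "finite (supp f)" "finite (supp h)"
  shows "lin_ext g (f - h) = lin_ext g f - lin_ext g h"
proof -
  have "f - h = f + sc (-1) h" by (rule ext) simp
  moreover have "finite (supp (sc (-1) h))" using assms(2) supp_sc finite_subset by metis
  ultimately have "lin_ext g (f - h) = lin_ext g f + lin_ext g (sc (-1) h)"
    using assms lin_ext_add by metis
  also have "\<dots> = lin_ext g f + sc (-1) (lin_ext g h)" using assms lin_ext_sc[of h g "-1"] by simp
  finally show ?thesis by (simp add: fun_eq_iff)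
qed

definition zdec :: "nat \<Rightarrow> word \<Rightarrow> word" where
  "zdec p w = (case w ! p of (m, b, e) \<Rightarrow> w[p := (m - 1, b, e)])"

lemma zsh_zdec[simp]: "zsh p (zdec p v) = v"
  unfolding zsh_def zdec_def
  by (cases "p < length v") (auto split: prod.splits simp: list_update_beyond, metis list_update_id)

lemma zdec_zsh[simp]: "zdec p (zsh p v) = v"
  unfolding zsh_def zdec_def
  by (cases "p < length v") (auto split: prod.splits simp: list_update_beyond, metis list_update_id)

lemma zsh_eq_iff: "zsh p w = v \<longleftrightarrow> w = zdec p v"
  by (metis zsh_zdec zdec_zsh)

lemma Zop_apply:
  assumes "finite (supp f)"
  shows "Zop p f v = f (zdec p v)"
proof -
  have "Zop p f v = (\<Sum>w\<in>supp f. f w * delta (zsh p w) v)"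
    unfolding Zop_def by (rule lin_ext_finite) (use assms in auto)
  also have "\<dots> = (\<Sum>w\<in>supp f. if w = zdec p v then f w else 0)"
    by (rule sum.cong) (auto simp: delta_def zsh_eq_iff)
  also have "\<dots> = f (zdec p v)"
    using assms by (auto simp: supp_def)
  finally show ?thesis .
qed

lemma length_swapc[simp]: "length (swapc p w) = length w"
  unfolding swapc_def by (auto split: prod.splits)
lemma length_swapN[simp]: "length (swapN p w) = length w"
  unfolding swapN_def by (auto split: prod.splits)
lemma length_swapL[simp]: "length (swapL p w) = length w"
  unfolding swapL_def by (auto split: prod.splits)
lemma length_zsh[simp]: "length (zsh p w) = length w"
  unfolding zsh_def by (auto split: prod.splits)
lemma length_zdec[simp]: "length (zdec p w) = length w"
  unfolding zdec_def by (auto split: prod.splits)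

lemma swapc_swapc: "Suc p < length w \<Longrightarrow> swapc p (swapc p w) = w"
  unfolding swapc_def
  by (auto split: prod.splits simp: nth_list_update list_update_swap intro!: nth_equalityI)

lemma Sop_apply:
  assumes "finite (supp f)" "\<And>w. f w \<noteq> 0 \<Longrightarrow> Suc p < length w"
  shows "Sop p f v = f (swapc p v)"
proof -
  have "Sop p f v = (\<Sum>w\<in>supp f. f w * delta (swapc p w) v)"
    unfolding Sop_def by (rule lin_ext_finite) (use assms in auto)
  also have "\<dots> = (\<Sum>w\<in>supp f. if w = swapc p v then f w else 0)"
  proof (rule sum.cong)
    fix w assume w: "w \<in> supp f"
    then have "Suc p < length w" using assms(2) by (auto simp: supp_def)
    then have "swapc p w = v \<longleftrightarrow> w = swapc p v"
      by (metis swapc_swapc length_swapc)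
    then show "f w * delta (swapc p w) v = (if w = swapc p v then f w else 0)"
      by (auto simp: delta_def)
  qed simp
  also have "\<dots> = f (swapc p v)"
    using assms by (auto simp: supp_def)
  finally show ?thesis .
qed


definition ind :: "bool \<Rightarrow> K" where "ind P = (if P then 1 else 0)"

definition SI :: "int \<Rightarrow> int \<Rightarrow> int \<Rightarrow> K" where
  "SI lo hi i = (if lo \<le> i \<and> i \<le> hi then 1 else if hi < i \<and> i < lo then -1 else 0)"

lemma SI_tele: "SI lo hi (i - 1) - SI lo hi i = ind (i = hi + 1) - ind (i = lo)"
  unfolding SI_def ind_def by auto

definition Gq :: "K \<Rightarrow> nat \<Rightarrow> nat \<Rightarrow> int \<Rightarrow> int \<Rightarrow> int \<Rightarrow> K" where
  "Gq q \<beta> \<gamma> a c i = (if \<beta> = \<gamma> then SI (c+1) a i - q^2 * SI c (a-1) i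
     else if \<gamma> < \<beta> then ind (i = a) + (1 - q^2) * SI c (a-1) i
     else ind (i = a) + (1 - q^2) * SI (c+1) (a-1) i)"

lemma Gq_tele:
  "Gq q \<beta> \<gamma> a c (i - 1) - Gq q \<beta> \<gamma> a c i =
    (if \<beta> = \<gamma> then ind (i = a + 1) - ind (i = c + 1) - q^2 * (ind (i = a) - ind (i = c))
     else if \<gamma> < \<beta> then ind (i = a + 1) - ind (i = a) + (1 - q^2) * (ind (i = a) - ind (i = c))
     else ind (i = a + 1) - ind (i = a) + (1 - q^2) * (ind (i = a) - ind (i = c + 1)))"
proof -
  have e1: "ind (i - 1 = a) = ind (i = a + 1)" unfolding ind_def by auto
  have t1: "SI (c+1) a (i - 1) - SI (c+1) a i = ind (i = a + 1) - ind (i = c + 1)" by (rule SI_tele)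
  have t2: "SI c (a-1) (i - 1) - SI c (a-1) i = ind (i = a) - ind (i = c)" using SI_tele[of c "a-1" i] by simp
  have t3: "SI (c+1) (a-1) (i - 1) - SI (c+1) (a-1) i = ind (i = a) - ind (i = c + 1)" using SI_tele[of "c+1" "a-1" i] by simp
  show ?thesis
  proof (cases "\<beta> = \<gamma>")
    case True
    then have "Gq q \<beta> \<gamma> a c (i - 1) - Gq q \<beta> \<gamma> a c i =
      (SI (c+1) a (i - 1) - SI (c+1) a i) - q^2 * (SI c (a-1) (i - 1) - SI c (a-1) i)"
      unfolding Gq_def by (simp add: algebra_simps)
    then show ?thesis unfolding t1 t2 using True by simp
  next
    case F: False
    show ?thesis
    proof (cases "\<gamma> < \<beta>")
      case True
      then have "Gq q \<beta> \<gamma> a c (i - 1) - Gq q \<beta> \<gamma> a c i =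
        (ind (i - 1 = a) - ind (i = a)) + (1 - q^2) * (SI c (a-1) (i - 1) - SI c (a-1) i)"
        unfolding Gq_def using F by (simp add: algebra_simps)
      then show ?thesis unfolding t2 e1 using True F by simp
    next
      case False
      then have "Gq q \<beta> \<gamma> a c (i - 1) - Gq q \<beta> \<gamma> a c i =
        (ind (i - 1 = a) - ind (i = a)) + (1 - q^2) * (SI (c+1) (a-1) (i - 1) - SI (c+1) (a-1) i)"
        unfolding Gq_def using F by (simp add: algebra_simps)
      then show ?thesis unfolding t3 e1 using False F by simp
    qed
  qed
qed

definition PhiQ :: "K \<Rightarrow> (int \<times> nat \<times> nat) \<Rightarrow> (int \<times> nat \<times> nat) \<Rightarrow> (int \<times> nat \<times> nat) \<Rightarrow> (int \<times> nat \<times> nat) \<Rightarrow> K" where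
  "PhiQ q A B X Y = (if snd (snd X) = snd (snd A) \<and> snd (snd Y) = snd (snd B) \<and> fst X + fst Y = fst A + fst B then
     ind (fst (snd X) = fst (snd A) \<and> fst (snd Y) = fst (snd B)) * Gq q (fst (snd A)) (fst (snd B)) (fst A) (fst B) (fst X)
     - q * ind (fst (snd X) = fst (snd B) \<and> fst (snd Y) = fst (snd A) \<and> fst (snd A) \<noteq> fst (snd B) \<and> fst X = fst B)
   else 0)"

definition RR :: "K \<Rightarrow> (int \<times> nat \<times> nat) \<Rightarrow> (int \<times> nat \<times> nat) \<Rightarrow> (int \<times> nat \<times> nat) \<Rightarrow> (int \<times> nat \<times> nat) \<Rightarrow> K" where
  "RR q A B X Y = (case A of (a, \<beta>, \<epsilon>) \<Rightarrow> case B of (c, \<gamma>, \<eta>) \<Rightarrow>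
     if \<beta> = \<gamma> then q^2 * ind ((X, Y) = ((a+1, \<beta>, \<epsilon>), B)) - ind ((X, Y) = (A, (c+1, \<gamma>, \<eta>)))
     else q * (ind ((X, Y) = ((a+1, \<beta>, \<epsilon>), B)) - ind ((X, Y) = (A, (c+1, \<gamma>, \<eta>))))
       + (q^2 - 1) * ind ((X, Y) = (if \<gamma> < \<beta> then ((a+1, \<gamma>, \<epsilon>), (c, \<beta>, \<eta>)) else ((a, \<gamma>, \<epsilon>), (c+1, \<beta>, \<eta>)))))"

lemma ind_False[simp]: "ind False = 0" and ind_True[simp]: "ind True = 1"
  by (auto simp: ind_def)

lemma PhiQ_zero: "\<not> (snd (snd X) = snd (snd A) \<and> snd (snd Y) = snd (snd B) \<and> fst X + fst Y = fst A + fst B)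
   \<Longrightarrow> PhiQ q A B X Y = 0"
  unfolding PhiQ_def by (rule if_not_P)

lemma RR_zero: assumes "\<not> (snd (snd X) = snd (snd A) \<and> snd (snd Y) = snd (snd B) \<and> fst X + fst Y = fst A + fst B + 1)"
  shows "RR q A B X Y = 0"
proof -
  obtain a \<beta> \<epsilon> where A: "A = (a, \<beta>, \<epsilon>)" by (cases A) auto
  obtain c \<gamma> \<eta> where B: "B = (c, \<gamma>, \<eta>)" by (cases B) auto
  have 1: "ind ((X, Y) = ((a+1, \<beta>, \<epsilon>), (c, \<gamma>, \<eta>))) = 0" using assms unfolding A B ind_def by auto
  have 2: "ind ((X, Y) = ((a, \<beta>, \<epsilon>), (c+1, \<gamma>, \<eta>))) = 0" using assms unfolding A B ind_def by auto
  have 3: "ind ((X, Y) = (if \<gamma> < \<beta> then ((a+1, \<gamma>, \<epsilon>), (c, \<beta>, \<eta>)) else ((a, \<gamma>, \<epsilon>), (c+1, \<beta>, \<eta>)))) = 0"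
    using assms unfolding A B ind_def by auto
  show ?thesis unfolding RR_def A B prod.case 1 2 3 by simp
qed

lemma RR_zero2: assumes "\<not> ((fst (snd X), fst (snd Y)) = (fst (snd A), fst (snd B)) \<or> (fst (snd X), fst (snd Y)) = (fst (snd B), fst (snd A)))"
  shows "RR q A B X Y = 0"
proof -
  obtain a \<beta> \<epsilon> where A: "A = (a, \<beta>, \<epsilon>)" by (cases A) auto
  obtain c \<gamma> \<eta> where B: "B = (c, \<gamma>, \<eta>)" by (cases B) auto
  have 1: "ind ((X, Y) = ((a+1, \<beta>, \<epsilon>), (c, \<gamma>, \<eta>))) = 0" using assms unfolding A B ind_def by auto
  have 2: "ind ((X, Y) = ((a, \<beta>, \<epsilon>), (c+1, \<gamma>, \<eta>))) = 0" using assms unfolding A B ind_def by auto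
  have 3: "ind ((X, Y) = (if \<gamma> < \<beta> then ((a+1, \<gamma>, \<epsilon>), (c, \<beta>, \<eta>)) else ((a, \<gamma>, \<epsilon>), (c+1, \<beta>, \<eta>)))) = 0"
    using assms unfolding A B ind_def by auto
  show ?thesis unfolding RR_def A B prod.case 1 2 3 by simp
qed

lemma PhiQ_straight: "PhiQ q (a, \<beta>, \<epsilon>) (c, \<gamma>, \<eta>) (i, \<beta>, \<epsilon>) (i', \<gamma>, \<eta>) = (if i + i' = a + c then Gq q \<beta> \<gamma> a c i else 0)"
proof -
  have "ind (\<beta> = \<gamma> \<and> \<gamma> = \<beta> \<and> \<beta> \<noteq> \<gamma> \<and> i = c) = 0" by (simp add: ind_def)
  then show ?thesis by (simp add: PhiQ_def)
qed

lemma pair_identity: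
  fixes A B :: "int \<times> nat \<times> nat"
  shows "PhiQ q A B (i - 1, \<beta>', \<epsilon>') (i', \<gamma>', \<eta>') - PhiQ q A B (i, \<beta>', \<epsilon>') (i' - 1, \<gamma>', \<eta>') =
    ind ((i - 1, \<beta>', \<epsilon>') = A \<and> (i', \<gamma>', \<eta>') = B) - q^2 * ind ((i, \<beta>', \<epsilon>') = A \<and> (i' - 1, \<gamma>', \<eta>') = B)
    + RR q A B (i', \<gamma>', \<epsilon>') (i, \<beta>', \<eta>')"
proof -
  obtain a \<beta> \<epsilon> where A: "A = (a, \<beta>, \<epsilon>)" by (cases A) auto
  obtain c \<gamma> \<eta> where B: "B = (c, \<gamma>, \<eta>)" by (cases B) auto
  show ?thesis
  proof (cases "\<epsilon>' = \<epsilon> \<and> \<eta>' = \<eta> \<and> i + i' = a + c + 1")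
    case False
    have 1: "PhiQ q A B (i - 1, \<beta>', \<epsilon>') (i', \<gamma>', \<eta>') = 0" using False by (intro PhiQ_zero) (auto simp: A B)
    have 2: "PhiQ q A B (i, \<beta>', \<epsilon>') (i' - 1, \<gamma>', \<eta>') = 0" using False by (intro PhiQ_zero) (auto simp: A B)
    have 3: "RR q A B (i', \<gamma>', \<epsilon>') (i, \<beta>', \<eta>') = 0" using False by (intro RR_zero) (auto simp: A B)
    have 4: "ind ((i - 1, \<beta>', \<epsilon>') = A \<and> (i', \<gamma>', \<eta>') = B) = 0" using False unfolding ind_def by (auto simp: A B)
    have 5: "ind ((i, \<beta>', \<epsilon>') = A \<and> (i' - 1, \<gamma>', \<eta>') = B) = 0" using False unfolding ind_def by (auto simp: A B)
    show ?thesis unfolding 1 2 3 4 5 by simp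
  next
    case True
    then have e: "\<epsilon>' = \<epsilon>" "\<eta>' = \<eta>" and i': "i' = a + c + 1 - i" by auto
    show ?thesis
    proof (cases "\<beta>' = \<beta> \<and> \<gamma>' = \<gamma>")
      case st: True
      have L: "PhiQ q A B (i - 1, \<beta>', \<epsilon>') (i', \<gamma>', \<eta>') - PhiQ q A B (i, \<beta>', \<epsilon>') (i' - 1, \<gamma>', \<eta>')
          = Gq q \<beta> \<gamma> a c (i - 1) - Gq q \<beta> \<gamma> a c i"
        unfolding A B using st e i' PhiQ_straight by simp
      have r1: "ind ((i - 1, \<beta>', \<epsilon>') = A \<and> (i', \<gamma>', \<eta>') = B) = ind (i = a + 1)"
        unfolding A B using st e i' by (auto simp: ind_def)
      have r2: "ind ((i, \<beta>', \<epsilon>') = A \<and> (i' - 1, \<gamma>', \<eta>') = B) = ind (i = a)"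
        unfolding A B using st e i' by (auto simp: ind_def)
      have r3: "RR q A B (i', \<gamma>', \<epsilon>') (i, \<beta>', \<eta>') =
          (if \<beta> = \<gamma> then q^2 * ind (i = c) - ind (i = c + 1)
           else if \<gamma> < \<beta> then (q^2 - 1) * ind (i = c) else (q^2 - 1) * ind (i = c + 1))"
        unfolding A B RR_def using st e i' by (auto simp: ind_def)
      show ?thesis unfolding L r1 r2 r3 Gq_tele
        by (cases "\<beta> = \<gamma>"; cases "\<gamma> < \<beta>") (simp_all add: algebra_simps)
    next
      case ns: False
      show ?thesis
      proof (cases "\<beta>' = \<gamma> \<and> \<gamma>' = \<beta> \<and> \<beta> \<noteq> \<gamma>")
        case sw: True
        have L: "PhiQ q A B (i - 1, \<beta>', \<epsilon>') (i', \<gamma>', \<eta>') - PhiQ q A B (i, \<beta>', \<epsilon>') (i' - 1, \<gamma>', \<eta>')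
          = q * ind (i = c) - q * ind (i = c + 1)"
          unfolding A B PhiQ_def using sw e i' by (auto simp: ind_def)
        have r1: "ind ((i - 1, \<beta>', \<epsilon>') = A \<and> (i', \<gamma>', \<eta>') = B) = 0"
          unfolding A B using sw by (auto simp: ind_def)
        have r2: "ind ((i, \<beta>', \<epsilon>') = A \<and> (i' - 1, \<gamma>', \<eta>') = B) = 0"
          unfolding A B using sw by (auto simp: ind_def)
        have r3: "RR q A B (i', \<gamma>', \<epsilon>') (i, \<beta>', \<eta>') = q * ind (i = c) - q * ind (i = c + 1)"
          unfolding A B RR_def using sw e i' by (auto simp: ind_def)
        show ?thesis unfolding L r1 r2 r3 by simp
      next
        case nsw: False
        have 1: "PhiQ q A B (i - 1, \<beta>', \<epsilon>') (i', \<gamma>', \<eta>') = 0" using ns nsw by (auto simp: A B PhiQ_def)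
        have 2: "PhiQ q A B (i, \<beta>', \<epsilon>') (i' - 1, \<gamma>', \<eta>') = 0" using ns nsw by (auto simp: A B PhiQ_def)
        have 3: "RR q A B (i', \<gamma>', \<epsilon>') (i, \<beta>', \<eta>') = 0" using ns nsw by (intro RR_zero2) (auto simp: A B)
        have 4: "ind ((i - 1, \<beta>', \<epsilon>') = A \<and> (i', \<gamma>', \<eta>') = B) = 0" using ns unfolding ind_def by (auto simp: A B)
        have 5: "ind ((i, \<beta>', \<epsilon>') = A \<and> (i' - 1, \<gamma>', \<eta>') = B) = 0" using ns unfolding ind_def by (auto simp: A B)
        show ?thesis unfolding 1 2 3 4 5 by simp
      qed
    qed
  qed
qed


definition setp :: "word \<Rightarrow> nat \<Rightarrow> (int \<times> nat \<times> nat) \<Rightarrow> (int \<times> nat \<times> nat) \<Rightarrow> word" where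
  "setp w p X Y = w[p := X, Suc p := Y]"

definition Rst :: "word \<Rightarrow> nat \<Rightarrow> word \<Rightarrow> bool" where
  "Rst w p v \<longleftrightarrow> length v = length w \<and> (\<forall>j<length w. j \<noteq> p \<longrightarrow> j \<noteq> Suc p \<longrightarrow> v ! j = w ! j)"

definition QQ :: "nat \<Rightarrow> nat \<Rightarrow> word \<Rightarrow> tens" where
  "QQ N p w = (\<lambda>v. if Rst w p v then PhiQ (qK N) (w ! p) (w ! Suc p) (v ! p) (v ! Suc p) else 0)"

definition TCw :: "nat \<Rightarrow> nat \<Rightarrow> word \<Rightarrow> tens" where
  "TCw N p w = QQ N p w - delta w"

context
  fixes w :: word and p :: nat
  assumes p: "Suc p < length w"
begin

lemma setp_nth1[simp]: "setp w p X Y ! p = X" using p by (simp add: setp_def nth_list_update)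
lemma setp_nth2[simp]: "setp w p X Y ! Suc p = Y" using p by (simp add: setp_def)
lemma length_setp[simp]: "length (setp w p X Y) = length w" by (simp add: setp_def)
lemma Rst_setp[simp]: "Rst w p (setp w p X Y)" by (simp add: Rst_def setp_def nth_list_update)
lemma Rst_self[simp]: "Rst w p w" by (simp add: Rst_def)

lemma Rst_eq: "Rst w p v \<Longrightarrow> v = setp w p (v ! p) (v ! Suc p)"
  unfolding Rst_def setp_def using p
  by (intro nth_equalityI) (auto simp: nth_list_update)

lemma setp_inj[simp]: "setp w p X Y = setp w p X' Y' \<longleftrightarrow> X = X' \<and> Y = Y'"
  by (metis setp_nth1 setp_nth2)

lemma self_setp: "w = setp w p (w ! p) (w ! Suc p)" by (rule Rst_eq) simp

lemma zdec_setp1: "zdec p (setp w p (i, \<beta>, \<epsilon>) Y) = setp w p (i - 1, \<beta>, \<epsilon>) Y"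
  using p by (simp add: zdec_def setp_def nth_list_update list_update_swap)
lemma zdec_setp2: "zdec (Suc p) (setp w p X (i, \<beta>, \<epsilon>)) = setp w p X (i - 1, \<beta>, \<epsilon>)"
  using p by (simp add: zdec_def setp_def)
lemma zsh_setp1: "zsh p (setp w p (i, \<beta>, \<epsilon>) Y) = setp w p (i + 1, \<beta>, \<epsilon>) Y"
  using p by (simp add: zsh_def setp_def nth_list_update list_update_swap)
lemma zsh_setp2: "zsh (Suc p) (setp w p X (i, \<beta>, \<epsilon>)) = setp w p X (i + 1, \<beta>, \<epsilon>)"
  using p by (simp add: zsh_def setp_def)
lemma swapc_setp: "swapc p (setp w p (i, \<beta>, \<epsilon>) (i', \<gamma>, \<eta>)) = setp w p (i', \<gamma>, \<epsilon>) (i, \<beta>, \<eta>)"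
  using p by (simp add: swapc_def setp_def nth_list_update list_update_swap)
lemma swapL_setp: "swapL p (setp w p (i, \<beta>, \<epsilon>) (i', \<gamma>, \<eta>)) = setp w p (i, \<gamma>, \<epsilon>) (i', \<beta>, \<eta>)"
  using p by (simp add: swapL_def setp_def nth_list_update list_update_swap)
lemma swapN_setp: "swapN p (setp w p (i, \<beta>, \<epsilon>) (i', \<gamma>, \<eta>)) = setp w p (i, \<beta>, \<eta>) (i', \<gamma>, \<epsilon>)"
  using p by (simp add: swapN_def setp_def nth_list_update list_update_swap)

lemma Rst_zdec1: "Rst w p (zdec p v) \<longleftrightarrow> Rst w p v"
  unfolding Rst_def zdec_def by (auto split: prod.splits simp: nth_list_update)
lemma Rst_zdec2: "Rst w p (zdec (Suc p) v) \<longleftrightarrow> Rst w p v"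
  unfolding Rst_def zdec_def by (auto split: prod.splits simp: nth_list_update)
lemma Rst_swapc: "Rst w p (swapc p v) \<longleftrightarrow> Rst w p v"
  unfolding Rst_def swapc_def by (auto split: prod.splits simp: nth_list_update)

lemma delta_setp: "delta (setp w p X Y) v = (if Rst w p v then ind ((v ! p, v ! Suc p) = (X, Y)) else 0)"
proof (cases "Rst w p v")
  case True
  then have "v = setp w p (v ! p) (v ! Suc p)" by (rule Rst_eq)
  then show ?thesis using True by (auto simp: delta_def ind_def)
next
  case False
  then show ?thesis by (auto simp: delta_def)
qed

end


lemma Gq_nz: "Gq q \<beta> \<gamma> a c i \<noteq> 0 \<Longrightarrow> min a c \<le> i \<and> i \<le> max a c"
  unfolding Gq_def SI_def ind_def by (auto split: if_splits)

lemma Gq_top: "c < a \<Longrightarrow> Gq q \<beta> \<gamma> a c a = 1"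
  unfolding Gq_def SI_def ind_def by auto

context
  fixes w :: word and p :: nat
  assumes p: "Suc p < length w"
begin

lemmas ctx_simps1[simp] = setp_nth1[OF p] setp_nth2[OF p] Rst_setp[OF p] Rst_self[OF p]

lemma w_setp: "w ! p = A \<Longrightarrow> w ! Suc p = B \<Longrightarrow> w = setp w p A B"
  using self_setp[OF p] by simp

lemma Rop_delta_apply:
  "Rop N p (delta w) v = (if Rst w p v then RR (qK N) (w ! p) (w ! Suc p) (v ! p) (v ! Suc p) else 0)"
proof -
  obtain a \<beta> \<epsilon> where A: "w ! p = (a, \<beta>, \<epsilon>)" by (cases "w ! p") auto
  obtain c \<gamma> \<eta> where B: "w ! Suc p = (c, \<gamma>, \<eta>)" by (cases "w ! Suc p") auto
  have W: "w = setp w p (a, \<beta>, \<epsilon>) (c, \<gamma>, \<eta>)" using w_setp A B by simp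
  have z1: "zsh p w = setp w p (a + 1, \<beta>, \<epsilon>) (c, \<gamma>, \<eta>)" by (subst W) (simp add: zsh_setp1[OF p])
  have z2: "zsh (Suc p) w = setp w p (a, \<beta>, \<epsilon>) (c + 1, \<gamma>, \<eta>)" by (subst W) (simp add: zsh_setp2[OF p])
  have sL: "swapL p w = setp w p (a, \<gamma>, \<epsilon>) (c, \<beta>, \<eta>)" by (subst W) (simp add: swapL_setp[OF p])
  have z3: "zsh p (swapL p w) = setp w p (a + 1, \<gamma>, \<epsilon>) (c, \<beta>, \<eta>)" unfolding sL by (simp add: zsh_setp1[OF p])
  have z4: "zsh (Suc p) (swapL p w) = setp w p (a, \<gamma>, \<epsilon>) (c + 1, \<beta>, \<eta>)" unfolding sL by (simp add: zsh_setp2[OF p])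
  have R: "Rop N p (delta w) = (if \<beta> = \<gamma> then sc ((qK N)^2) (delta (zsh p w)) - delta (zsh (Suc p) w)
          else sc (qK N) (delta (zsh p w) - delta (zsh (Suc p) w))
          + sc ((qK N)^2 - 1) (delta (zsh (if \<beta> > \<gamma> then p else Suc p) (swapL p w))))"
    unfolding Rop_def lin_ext_delta using A B by (simp add: Let_def)
  show ?thesis
  proof (cases "Rst w p v")
    case False
    then show ?thesis unfolding R z1 z2 by (simp add: delta_setp[OF p] z3 z4)
  next
    case True
    then show ?thesis unfolding R z1 z2 z3 z4 A B RR_def
      by (cases "\<beta> = \<gamma>"; cases "\<gamma> < \<beta>") (simp_all add: delta_setp[OF p] A B z3 z4)
  qed
qed

lemma supp_Rop_delta: "supp (Rop N p (delta w)) \<subseteq> {v. Rst w p v}"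
  by (auto simp: supp_def Rop_delta_apply)

end


lemma PhiQ_nz:
  assumes "PhiQ q (a, \<beta>, \<epsilon>) (c, \<gamma>, \<eta>) (i, \<beta>', \<epsilon>') (i', \<gamma>', \<eta>') \<noteq> 0"
  shows "\<epsilon>' = \<epsilon> \<and> \<eta>' = \<eta> \<and> i + i' = a + c \<and>
    ((\<beta>' = \<beta> \<and> \<gamma>' = \<gamma> \<and> Gq q \<beta> \<gamma> a c i \<noteq> 0) \<or> (\<beta>' = \<gamma> \<and> \<gamma>' = \<beta> \<and> \<beta> \<noteq> \<gamma> \<and> i = c))"
proof -
  have c: "\<epsilon>' = \<epsilon> \<and> \<eta>' = \<eta> \<and> i + i' = a + c" using assms by (auto simp: PhiQ_def split: if_splits)
  then have "ind (\<beta>' = \<beta> \<and> \<gamma>' = \<gamma>) * Gq q \<beta> \<gamma> a c i - q * ind (\<beta>' = \<gamma> \<and> \<gamma>' = \<beta> \<and> \<beta> \<noteq> \<gamma> \<and> i = c) \<noteq> 0"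
    using assms by (simp add: PhiQ_def)
  then have "(ind (\<beta>' = \<beta> \<and> \<gamma>' = \<gamma>) \<noteq> 0 \<and> Gq q \<beta> \<gamma> a c i \<noteq> 0) \<or> ind (\<beta>' = \<gamma> \<and> \<gamma>' = \<beta> \<and> \<beta> \<noteq> \<gamma> \<and> i = c) \<noteq> 0"
    by auto
  then show ?thesis using c by (auto simp: ind_def split: if_splits)
qed

context
  fixes w :: word and p :: nat
  assumes p: "Suc p < length w"
begin

lemmas ctx_simps2[simp] = setp_nth1[OF p] setp_nth2[OF p] Rst_setp[OF p] Rst_self[OF p]

lemma QQ_nz:
  assumes "QQ N p w v \<noteq> 0" "w ! p = (a, \<beta>, \<epsilon>)" "w ! Suc p = (c, \<gamma>, \<eta>)"
  shows "\<exists>i \<beta>' \<gamma>'. v = setp w p (i, \<beta>', \<epsilon>) (a + c - i, \<gamma>', \<eta>) \<and>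
    ((\<beta>' = \<beta> \<and> \<gamma>' = \<gamma> \<and> Gq (qK N) \<beta> \<gamma> a c i \<noteq> 0) \<or> (\<beta>' = \<gamma> \<and> \<gamma>' = \<beta> \<and> \<beta> \<noteq> \<gamma> \<and> i = c))"
proof -
  have R: "Rst w p v" using assms(1) by (auto simp: QQ_def split: if_splits)
  obtain i \<beta>' \<epsilon>' where X: "v ! p = (i, \<beta>', \<epsilon>')" by (cases "v ! p") auto
  obtain i' \<gamma>' \<eta>' where Y: "v ! Suc p = (i', \<gamma>', \<eta>')" by (cases "v ! Suc p") auto
  have "PhiQ (qK N) (a, \<beta>, \<epsilon>) (c, \<gamma>, \<eta>) (i, \<beta>', \<epsilon>') (i', \<gamma>', \<eta>') \<noteq> 0"
    using assms R X Y by (simp add: QQ_def)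
  note P = PhiQ_nz[OF this]
  have ii: "i' = a + c - i" using P by arith
  have "v = setp w p (i, \<beta>', \<epsilon>') (i', \<gamma>', \<eta>')"
    using Rst_eq[OF p R] X Y by simp
  then have "v = setp w p (i, \<beta>', \<epsilon>) (a + c - i, \<gamma>', \<eta>)"
    using ii P by simp
  then show ?thesis using P by blast
qed

lemma QQ_supp:
  assumes "w ! p = (a, \<beta>, \<epsilon>)" "w ! Suc p = (c, \<gamma>, \<eta>)"
  shows "supp (QQ N p w) \<subseteq> (\<lambda>(i, \<beta>', \<gamma>'). setp w p (i, \<beta>', \<epsilon>) (a + c - i, \<gamma>', \<eta>)) ` ({min a c..max a c} \<times> {\<beta>, \<gamma>} \<times> {\<beta>, \<gamma>})"
proof
  fix v assume "v \<in> supp (QQ N p w)"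
  then have "QQ N p w v \<noteq> 0" by (simp add: supp_def)
  from QQ_nz[OF this assms] obtain i \<beta>' \<gamma>' where
    v: "v = setp w p (i, \<beta>', \<epsilon>) (a + c - i, \<gamma>', \<eta>)" and
    d: "(\<beta>' = \<beta> \<and> \<gamma>' = \<gamma> \<and> Gq (qK N) \<beta> \<gamma> a c i \<noteq> 0) \<or> (\<beta>' = \<gamma> \<and> \<gamma>' = \<beta> \<and> \<beta> \<noteq> \<gamma> \<and> i = c)" by blast
  have "min a c \<le> i \<and> i \<le> max a c" using d Gq_nz by auto
  then show "v \<in> (\<lambda>(i, \<beta>', \<gamma>'). setp w p (i, \<beta>', \<epsilon>) (a + c - i, \<gamma>', \<eta>)) ` ({min a c..max a c} \<times> {\<beta>, \<gamma>} \<times> {\<beta>, \<gamma>})"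
    using v d by (auto intro!: image_eqI[of _ _ "(i, \<beta>', \<gamma>')"])
qed

lemma QQ_finite: "finite (supp (QQ N p w))"
proof -
  obtain a \<beta> \<epsilon> where A: "w ! p = (a, \<beta>, \<epsilon>)" by (cases "w ! p") auto
  obtain c \<gamma> \<eta> where B: "w ! Suc p = (c, \<gamma>, \<eta>)" by (cases "w ! Suc p") auto
  show ?thesis by (rule finite_subset[OF QQ_supp[OF A B]]) auto
qed

lemma Rop_finite: "finite (supp (Rop N p (delta w)))"
proof -
  have "Rop N p (delta w) = lin_ext (\<lambda>w. (let b1 = fst (snd (w ! p)); b2 = fst (snd (w ! Suc p)); q = qK N in
     if b1 = b2 then sc (q^2) (delta (zsh p w)) - delta (zsh (Suc p) w)
     else sc q (delta (zsh p w) - delta (zsh (Suc p) w))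
          + sc (q^2 - 1) (delta (zsh (if b1 > b2 then p else Suc p) (swapL p w))))) (delta w)"
    unfolding Rop_def ..
  also have "\<dots> = (let b1 = fst (snd (w ! p)); b2 = fst (snd (w ! Suc p)); q = qK N in
     if b1 = b2 then sc (q^2) (delta (zsh p w)) - delta (zsh (Suc p) w)
     else sc q (delta (zsh p w) - delta (zsh (Suc p) w))
          + sc (q^2 - 1) (delta (zsh (if b1 > b2 then p else Suc p) (swapL p w))))" by simp
  finally have E: "Rop N p (delta w) = \<dots>" .
  have "supp (Rop N p (delta w)) \<subseteq> {zsh p w, zsh (Suc p) w, zsh p (swapL p w), zsh (Suc p) (swapL p w)}"
    unfolding E by (auto simp: supp_def Let_def delta_def split: if_splits)
  then show ?thesis by (rule finite_subset) auto
qed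

lemma is_Tc_delta: "is_Tc N p (delta w) (TCw N p w)"
proof -
  have yx: "TCw N p w + delta w = QQ N p w" by (simp add: TCw_def)
  have fd: "finite (supp (delta w))" by (simp add: supp_delta)
  show ?thesis unfolding is_Tc_def yx
  proof (rule ext)
    fix v
    have L1: "Zop p (QQ N p w) v = QQ N p w (zdec p v)" by (rule Zop_apply[OF QQ_finite])
    have L2: "Zop (Suc p) (QQ N p w) v = QQ N p w (zdec (Suc p) v)" by (rule Zop_apply[OF QQ_finite])
    have L3: "Zop p (delta w) v = delta w (zdec p v)" by (rule Zop_apply[OF fd])
    have L4: "Zop (Suc p) (delta w) v = delta w (zdec (Suc p) v)" by (rule Zop_apply[OF fd])
    have L5: "Sop p (Rop N p (delta w)) v = Rop N p (delta w) (swapc p v)"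
    proof (rule Sop_apply[OF Rop_finite])
      fix u assume "Rop N p (delta w) u \<noteq> 0"
      then have "Rst w p u" by (auto simp: Rop_delta_apply[OF p] split: if_splits)
      then show "Suc p < length u" using p by (simp add: Rst_def)
    qed
    obtain a \<beta> \<epsilon> where A: "w ! p = (a, \<beta>, \<epsilon>)" by (cases "w ! p") auto
    obtain c \<gamma> \<eta> where B: "w ! Suc p = (c, \<gamma>, \<eta>)" by (cases "w ! Suc p") auto
    have W: "w = setp w p (a, \<beta>, \<epsilon>) (c, \<gamma>, \<eta>)" using w_setp[OF p A B] .
    have dw: "delta w u = (if Rst w p u then ind ((u ! p, u ! Suc p) = ((a, \<beta>, \<epsilon>), (c, \<gamma>, \<eta>))) else 0)" for u
      using delta_setp[OF p, of "(a, \<beta>, \<epsilon>)" "(c, \<gamma>, \<eta>)" u] unfolding W[symmetric] .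
    show "(Zop p (QQ N p w) - Zop (Suc p) (QQ N p w)) v =
      (Zop p (delta w) - sc ((qK N)\<^sup>2) (Zop (Suc p) (delta w)) + Sop p (Rop N p (delta w))) v"
    proof (cases "Rst w p v")
      case False
      then show ?thesis
        using L1 L2 L3 L4 L5
        by (simp add: QQ_def Rop_delta_apply[OF p] dw Rst_zdec1[OF p] Rst_zdec2[OF p] Rst_swapc[OF p])
    next
      case True
      obtain i \<beta>' \<epsilon>' where X: "v ! p = (i, \<beta>', \<epsilon>')" by (cases "v ! p") auto
      obtain i' \<gamma>' \<eta>' where Y: "v ! Suc p = (i', \<gamma>', \<eta>')" by (cases "v ! Suc p") auto
      have V: "v = setp w p (i, \<beta>', \<epsilon>') (i', \<gamma>', \<eta>')" using Rst_eq[OF p True] X Y by simp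
      have e1: "QQ N p w (zdec p v) = PhiQ (qK N) (a, \<beta>, \<epsilon>) (c, \<gamma>, \<eta>) (i - 1, \<beta>', \<epsilon>') (i', \<gamma>', \<eta>')"
        unfolding V zdec_setp1[OF p] QQ_def using A B by simp
      have e2: "QQ N p w (zdec (Suc p) v) = PhiQ (qK N) (a, \<beta>, \<epsilon>) (c, \<gamma>, \<eta>) (i, \<beta>', \<epsilon>') (i' - 1, \<gamma>', \<eta>')"
        unfolding V zdec_setp2[OF p] QQ_def using A B by simp
      have e3: "delta w (zdec p v) = ind ((i - 1, \<beta>', \<epsilon>') = (a, \<beta>, \<epsilon>) \<and> (i', \<gamma>', \<eta>') = (c, \<gamma>, \<eta>))"
        unfolding V zdec_setp1[OF p] dw by simp
      have e4: "delta w (zdec (Suc p) v) = ind ((i, \<beta>', \<epsilon>') = (a, \<beta>, \<epsilon>) \<and> (i' - 1, \<gamma>', \<eta>') = (c, \<gamma>, \<eta>))"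
        unfolding V zdec_setp2[OF p] dw by simp
      have e5: "Rop N p (delta w) (swapc p v) = RR (qK N) (a, \<beta>, \<epsilon>) (c, \<gamma>, \<eta>) (i', \<gamma>', \<epsilon>') (i, \<beta>', \<eta>')"
        unfolding V swapc_setp[OF p] Rop_delta_apply[OF p] using A B by simp
      show ?thesis using L1 L2 L3 L4 L5 unfolding e1 e2 e3 e4 e5
        using pair_identity[of "qK N" "(a, \<beta>, \<epsilon>)" "(c, \<gamma>, \<eta>)" i \<beta>' \<epsilon>' i' \<gamma>' \<eta>'] by simp
    qed
  qed
qed

end


lemma rel_zero: "0 \<in> rel_space N L r" unfolding rel_space_def by (rule fspan_zero)
lemma rel_add: "f \<in> rel_space N L r \<Longrightarrow> g \<in> rel_space N L r \<Longrightarrow> f + g \<in> rel_space N L r"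
  unfolding rel_space_def by (rule fspan_add)
lemma rel_diff: "f \<in> rel_space N L r \<Longrightarrow> g \<in> rel_space N L r \<Longrightarrow> f - g \<in> rel_space N L r"
  unfolding rel_space_def by (rule fspan_diff)
lemma rel_sc: "f \<in> rel_space N L r \<Longrightarrow> sc k f \<in> rel_space N L r"
  unfolding rel_space_def by (rule fspan_sc)

definition Cl :: "nat \<Rightarrow> nat \<Rightarrow> nat \<Rightarrow> word set \<Rightarrow> tens set" where
  "Cl N L r S = {f. \<exists>g \<in> fspan (delta ` S). f - g \<in> rel_space N L r}"

lemma Cl_rel: "f \<in> rel_space N L r \<Longrightarrow> f \<in> Cl N L r S"
  unfolding Cl_def using fspan_zero[of "delta ` S"] by (intro CollectI bexI[of _ 0]) auto

lemma Cl_delta: "v \<in> S \<Longrightarrow> delta v \<in> Cl N L r S"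
  unfolding Cl_def using rel_zero fspan_base[of "delta v" "delta ` S"] by (intro CollectI bexI[of _ "delta v"]) auto

lemma Cl_add: assumes "f \<in> Cl N L r S" "h \<in> Cl N L r S" shows "f + h \<in> Cl N L r S"
proof -
  obtain g where g: "g \<in> fspan (delta ` S)" "f - g \<in> rel_space N L r" using assms(1) unfolding Cl_def by blast
  obtain g' where g': "g' \<in> fspan (delta ` S)" "h - g' \<in> rel_space N L r" using assms(2) unfolding Cl_def by blast
  have e: "(f + h) - (g + g') = (f - g) + (h - g')" by (simp add: algebra_simps)
  have "(f + h) - (g + g') \<in> rel_space N L r" unfolding e using rel_add[OF g(2) g'(2)] .
  moreover have "g + g' \<in> fspan (delta ` S)" using fspan_add[OF g(1) g'(1)] .
  ultimately show ?thesis unfolding Cl_def by blast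
qed

lemma Cl_sc: assumes "f \<in> Cl N L r S" shows "sc k f \<in> Cl N L r S"
proof -
  obtain g where g: "g \<in> fspan (delta ` S)" "f - g \<in> rel_space N L r" using assms(1) unfolding Cl_def by blast
  have "sc k f - sc k g = sc k (f - g)" by (rule ext) (simp add: algebra_simps)
  then have "sc k f - sc k g \<in> rel_space N L r" using rel_sc[OF g(2)] by simp
  moreover have "sc k g \<in> fspan (delta ` S)" using fspan_sc[OF g(1)] .
  ultimately show ?thesis unfolding Cl_def by blast
qed

lemma Cl_uminus: "f \<in> Cl N L r S \<Longrightarrow> - f \<in> Cl N L r S"
  using Cl_sc[of f N L r S "-1"] by (simp add: fun_Compl_def sc_def)

lemma Cl_diff: "f \<in> Cl N L r S \<Longrightarrow> h \<in> Cl N L r S \<Longrightarrow> f - h \<in> Cl N L r S"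
  using Cl_add[of f N L r S "- h"] Cl_uminus by simp

lemma Cl_zero: "0 \<in> Cl N L r S" using Cl_rel rel_zero by blast

lemma Cl_sum: "finite I \<Longrightarrow> (\<And>i. i \<in> I \<Longrightarrow> F i \<in> Cl N L r S) \<Longrightarrow> sum F I \<in> Cl N L r S"
  by (induction I rule: finite_induct) (auto intro: Cl_zero Cl_add)

lemma fspan_Cl: assumes "\<And>v. v \<in> S \<Longrightarrow> delta v \<in> Cl N L r T" shows "fspan (delta ` S) \<subseteq> Cl N L r T"
proof
  fix g assume "g \<in> fspan (delta ` S)"
  then obtain A c where A: "finite A" "A \<subseteq> delta ` S" "g = (\<Sum>h\<in>A. sc (c h) h)" unfolding fspan_def by blast
  show "g \<in> Cl N L r T" unfolding A(3) using A(1,2) assms by (intro Cl_sum Cl_sc) auto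
qed

lemma Cl_trans: assumes "\<And>v. v \<in> S \<Longrightarrow> delta v \<in> Cl N L r T" "f \<in> Cl N L r S" shows "f \<in> Cl N L r T"
proof -
  obtain g where g: "g \<in> fspan (delta ` S)" "f - g \<in> rel_space N L r" using assms(2) unfolding Cl_def by blast
  have "g \<in> Cl N L r T" using fspan_Cl[OF assms(1)] g(1) by blast
  moreover have "f - g \<in> Cl N L r T" using Cl_rel g(2) by blast
  ultimately have "(f - g) + g \<in> Cl N L r T" using Cl_add by blast
  then show ?thesis by simp
qed

lemma Cl_mono: "S \<subseteq> T \<Longrightarrow> f \<in> Cl N L r S \<Longrightarrow> f \<in> Cl N L r T"
  by (rule Cl_trans[of S]) (auto intro: Cl_delta)

lemma fun_as_sum: assumes "finite B" "supp f \<subseteq> B" shows "f = (\<Sum>v\<in>B. sc (f v) (delta v))"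
proof
  fix u
  have "(\<Sum>v\<in>B. sc (f v) (delta v)) u = (\<Sum>v\<in>B. if v = u then f v else 0)"
    unfolding sum_fun_apply by (rule sum.cong) (auto simp: delta_def)
  also have "\<dots> = f u" using assms by (auto simp: supp_def)
  finally show "f u = (\<Sum>v\<in>B. sc (f v) (delta v)) u" by simp
qed

lemma Cl_fin: assumes "finite (supp f)" "supp f \<subseteq> S" shows "f \<in> Cl N L r S"
proof -
  have "f = (\<Sum>v\<in>supp f. sc (f v) (delta v))" by (rule fun_as_sum) (use assms in auto)
  also have "\<dots> \<in> Cl N L r S" using assms by (intro Cl_sum Cl_sc Cl_delta) auto
  finally show ?thesis .
qed

definition ventry :: "nat \<Rightarrow> nat \<Rightarrow> int \<times> nat \<times> nat \<Rightarrow> bool" where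
  "ventry N L x \<longleftrightarrow> 1 \<le> fst (snd x) \<and> fst (snd x) \<le> L \<and> 1 \<le> snd (snd x) \<and> snd (snd x) \<le> N"

lemma valid_word_iff: "valid_word N L r w \<longleftrightarrow> length w = r \<and> (\<forall>x\<in>set w. ventry N L x)"
  unfolding valid_word_def ventry_def by auto

lemma valid_nth: "valid_word N L r w \<Longrightarrow> i < r \<Longrightarrow> ventry N L (w ! i)"
  unfolding valid_word_iff by auto

lemma valid_setp:
  assumes "valid_word N L r w" "Suc p < r" "ventry N L X" "ventry N L Y"
  shows "valid_word N L r (setp w p X Y)"
proof -
  have "set (setp w p X Y) \<subseteq> insert Y (insert X (set w))"
    unfolding setp_def by (meson order.trans set_update_subset_insert insert_mono)
  then show ?thesis using assms unfolding valid_word_iff by (auto simp: setp_def)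
qed

lemma delta_tens: "valid_word N L r w \<Longrightarrow> delta w \<in> tens_space N L r"
  unfolding tens_space_def by (auto simp: delta_def)


lemma Tsop_delta_eq:
  assumes "w ! p = (a, \<beta>, \<epsilon>)" "w ! Suc p = (c, \<gamma>, \<eta>)"
  shows "Tsop N p (delta w) = (if \<epsilon> = \<eta> then sc ((qK N)^2) (delta w)
     else if \<epsilon> < \<eta> then sc (qK N) (delta (swapN p w))
     else sc (qK N) (delta (swapN p w)) + sc ((qK N)^2 - 1) (delta w))"
  unfolding Tsop_def lin_ext_delta using assms by (simp add: Let_def)

lemma setp_setp: "setp (setp w p X Y) p X' Y' = setp w p X' Y'"
  by (simp add: setp_def list_update_swap[of "Suc p" p] list_update_overwrite)

lemma Rst_setp_iff: "Suc p < length w \<Longrightarrow> Rst (setp w p X Y) p v \<longleftrightarrow> Rst w p v"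
  unfolding Rst_def setp_def by (auto simp: nth_list_update)

context
  fixes N L r :: nat and w :: word and p :: nat
  assumes vw: "valid_word N L r w" and p: "Suc p < r"
begin

lemma lw: "length w = r" using vw by (simp add: valid_word_def)
lemma pw: "Suc p < length w" using lw p by simp

lemmas ctx_simps3[simp] = setp_nth1[OF pw] setp_nth2[OF pw] Rst_setp[OF pw] Rst_self[OF pw]

lemma TCw_supp_gen:
  assumes A: "w ! p = (a, \<beta>, \<epsilon>)" and B: "w ! Suc p = (c, \<gamma>, \<eta>)"
  shows "supp (TCw N p w) \<subseteq> insert w ((\<lambda>(i, \<beta>', \<gamma>'). setp w p (i, \<beta>', \<epsilon>) (a + c - i, \<gamma>', \<eta>)) ` ({min a c..max a c} \<times> {\<beta>, \<gamma>} \<times> {\<beta>, \<gamma>}))"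
  using QQ_supp[OF pw A B, of N] unfolding TCw_def supp_def by (auto simp: delta_def)

lemma TCw_tens: "TCw N p w \<in> tens_space N L r"
proof -
  obtain a \<beta> \<epsilon> where A: "w ! p = (a, \<beta>, \<epsilon>)" by (cases "w ! p") auto
  obtain c \<gamma> \<eta> where B: "w ! Suc p = (c, \<gamma>, \<eta>)" by (cases "w ! Suc p") auto
  note S = TCw_supp_gen[OF A B]
  have vA: "ventry N L (a, \<beta>, \<epsilon>)" using valid_nth[OF vw, of p] A p by simp
  have vB: "ventry N L (c, \<gamma>, \<eta>)" using valid_nth[OF vw, of "Suc p"] B p by simp
  have fin: "finite (supp (TCw N p w))" by (rule finite_subset[OF S]) auto
  have val: "valid_word N L r v" if "TCw N p w v \<noteq> 0" for v
  proof -
    have "v \<in> supp (TCw N p w)" using that by (simp add: supp_def)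
    then have "v = w \<or> (\<exists>x \<in> {min a c..max a c} \<times> {\<beta>, \<gamma>} \<times> {\<beta>, \<gamma>}. v = (case x of (i, \<beta>', \<gamma>') \<Rightarrow> setp w p (i, \<beta>', \<epsilon>) (a + c - i, \<gamma>', \<eta>)))"
      using S by (auto simp: image_iff)
    then have "v = w \<or> (\<exists>i \<beta>' \<gamma>'. \<beta>' \<in> {\<beta>, \<gamma>} \<and> \<gamma>' \<in> {\<beta>, \<gamma>} \<and> v = setp w p (i, \<beta>', \<epsilon>) (a + c - i, \<gamma>', \<eta>))"
      by force
    then show ?thesis
    proof
      assume "v = w" then show ?thesis using vw by simp
    next
      assume "\<exists>i \<beta>' \<gamma>'. \<beta>' \<in> {\<beta>, \<gamma>} \<and> \<gamma>' \<in> {\<beta>, \<gamma>} \<and> v = setp w p (i, \<beta>', \<epsilon>) (a + c - i, \<gamma>', \<eta>)"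
      then obtain i \<beta>' \<gamma>' where "\<beta>' \<in> {\<beta>, \<gamma>}" "\<gamma>' \<in> {\<beta>, \<gamma>}" "v = setp w p (i, \<beta>', \<epsilon>) (a + c - i, \<gamma>', \<eta>)" by blast
      then show ?thesis using vA vB by (auto intro!: valid_setp[OF vw p] simp: ventry_def)
    qed
  qed
  show ?thesis unfolding tens_space_def using fin val by (simp add: supp_def)
qed

lemma rel_gen: "TCw N p w - Tsop N p (delta w) \<in> rel_space N L r"
  unfolding rel_space_def
  by (rule fspan_base) (use p delta_tens[OF vw] TCw_tens is_Tc_delta[OF pw] in blast)

lemma rel_gen_Cl: "Tsop N p (delta w) \<in> Cl N L r S \<longleftrightarrow> TCw N p w \<in> Cl N L r S"
proof
  assume "Tsop N p (delta w) \<in> Cl N L r S"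
  then have "(TCw N p w - Tsop N p (delta w)) + Tsop N p (delta w) \<in> Cl N L r S"
    using Cl_add Cl_rel rel_gen by blast
  then show "TCw N p w \<in> Cl N L r S" by simp
next
  assume "TCw N p w \<in> Cl N L r S"
  then have "TCw N p w - (TCw N p w - Tsop N p (delta w)) \<in> Cl N L r S"
    using Cl_diff Cl_rel rel_gen by blast
  then show "Tsop N p (delta w) \<in> Cl N L r S" by simp
qed

lemma TCw_suppA:
  assumes A: "w ! p = (a, \<beta>, \<epsilon>)" and B: "w ! Suc p = (c, \<gamma>, \<eta>)" and ca: "c < a"
  shows "supp (TCw N p w) \<subseteq> {setp w p (i, \<beta>', \<epsilon>) (a + c - i, \<gamma>', \<eta>) | i \<beta>' \<gamma>'. c \<le> i \<and> i < a \<and> \<beta>' \<in> {\<beta>, \<gamma>} \<and> \<gamma>' \<in> {\<beta>, \<gamma>}}"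
proof
  fix v assume "v \<in> supp (TCw N p w)"
  then have nz: "QQ N p w v - delta w v \<noteq> 0" by (simp add: supp_def TCw_def)
  have W: "w = setp w p (a, \<beta>, \<epsilon>) (c, \<gamma>, \<eta>)" using w_setp[OF pw A B] .
  have Qw: "QQ N p w w = 1"
  proof -
    have "QQ N p w w = PhiQ (qK N) (a, \<beta>, \<epsilon>) (c, \<gamma>, \<eta>) (a, \<beta>, \<epsilon>) (c, \<gamma>, \<eta>)"
      unfolding QQ_def using A B by simp
    also have "\<dots> = 1" using PhiQ_straight[of "qK N" a \<beta> \<epsilon> c \<gamma> \<eta> a c] Gq_top[OF ca] by simp
    finally show ?thesis .
  qed
  have vw': "v \<noteq> w" using nz Qw by (auto simp: delta_def)
  then have "QQ N p w v \<noteq> 0" using nz by (simp add: delta_def)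
  from QQ_nz[OF pw this A B] obtain i \<beta>' \<gamma>' where
    v: "v = setp w p (i, \<beta>', \<epsilon>) (a + c - i, \<gamma>', \<eta>)" and
    d: "(\<beta>' = \<beta> \<and> \<gamma>' = \<gamma> \<and> Gq (qK N) \<beta> \<gamma> a c i \<noteq> 0) \<or> (\<beta>' = \<gamma> \<and> \<gamma>' = \<beta> \<and> \<beta> \<noteq> \<gamma> \<and> i = c)" by blast
  have "c \<le> i \<and> i \<le> a" using d Gq_nz ca by force
  moreover have "i \<noteq> a"
  proof
    assume "i = a"
    then have "\<beta>' = \<beta> \<and> \<gamma>' = \<gamma>" using d ca by auto
    then have "v = w" using v W \<open>i = a\<close> by simp
    then show False using vw' by simp
  qed
  ultimately have "c \<le> i \<and> i < a \<and> \<beta>' \<in> {\<beta>, \<gamma>} \<and> \<gamma>' \<in> {\<beta>, \<gamma>}" using d by auto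
  then show "v \<in> {setp w p (i, \<beta>', \<epsilon>) (a + c - i, \<gamma>', \<eta>) | i \<beta>' \<gamma>'. c \<le> i \<and> i < a \<and> \<beta>' \<in> {\<beta>, \<gamma>} \<and> \<gamma>' \<in> {\<beta>, \<gamma>}}"
    using v by blast
qed

end


lemma Cl_solve:
  assumes "sc k f + g \<in> Cl N L r S" "g \<in> Cl N L r S" "k \<noteq> 0"
  shows "f \<in> Cl N L r S"
proof -
  have "(sc k f + g) - g \<in> Cl N L r S" using assms Cl_diff by blast
  then have "sc (1 / k) (sc k f) \<in> Cl N L r S" using Cl_sc by simp
  moreover have "sc (1 / k) (sc k f) = f" using assms(3) by (rule_tac ext) simp
  ultimately show ?thesis by simp
qed

definition OutA :: "word \<Rightarrow> nat \<Rightarrow> int \<Rightarrow> int \<Rightarrow> nat \<Rightarrow> nat \<Rightarrow> nat \<Rightarrow> nat \<Rightarrow> word set" where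
  "OutA w p a c \<beta> \<gamma> \<epsilon> \<eta> = {setp w p (i, \<beta>', \<epsilon>') (a + c - i, \<gamma>', \<eta>') | i \<beta>' \<gamma>' \<epsilon>' \<eta>'.
     c \<le> i \<and> i < a \<and> \<beta>' \<in> {\<beta>, \<gamma>} \<and> \<gamma>' \<in> {\<beta>, \<gamma>} \<and> ((\<epsilon>' = \<epsilon> \<and> \<eta>' = \<eta>) \<or> (\<epsilon>' = \<eta> \<and> \<eta>' = \<epsilon>))}"

context
  fixes N L r :: nat and w :: word and p :: nat and a c :: int and \<beta> \<gamma> \<epsilon> \<eta> :: nat
  assumes vw: "valid_word N L r w" and p: "Suc p < r"
    and A: "w ! p = (a, \<beta>, \<epsilon>)" and B: "w ! Suc p = (c, \<gamma>, \<eta>)"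
begin

lemma lw': "length w = r" using vw by (simp add: valid_word_def)
lemma pw': "Suc p < length w" using lw' p by simp

lemmas ctx_simps4[simp] = setp_nth1[OF pw'] setp_nth2[OF pw'] Rst_setp[OF pw'] Rst_self[OF pw']

lemma W: "w = setp w p (a, \<beta>, \<epsilon>) (c, \<gamma>, \<eta>)" using w_setp[OF pw' A B] .

lemma swN: "swapN p w = setp w p (a, \<beta>, \<eta>) (c, \<gamma>, \<epsilon>)"
  by (subst W) (simp add: swapN_setp[OF pw'] setp_setp)

lemma swC: "swapc p w = setp w p (c, \<gamma>, \<epsilon>) (a, \<beta>, \<eta>)"
  by (subst W) (simp add: swapc_setp[OF pw'] setp_setp)

lemma vA: "ventry N L (a, \<beta>, \<epsilon>)" using valid_nth[OF vw, of p] A p by simp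
lemma vB: "ventry N L (c, \<gamma>, \<eta>)" using valid_nth[OF vw, of "Suc p"] B p by simp

lemma vswN: "valid_word N L r (swapN p w)"
  unfolding swN using vA vB by (intro valid_setp[OF vw p]) (auto simp: ventry_def)
lemma vswC: "valid_word N L r (swapc p w)"
  unfolding swC using vA vB by (intro valid_setp[OF vw p]) (auto simp: ventry_def)

lemma swN_nth: "swapN p w ! p = (a, \<beta>, \<eta>)" "swapN p w ! Suc p = (c, \<gamma>, \<epsilon>)"
  unfolding swN by simp_all
lemma swNN: "swapN p (swapN p w) = w"
  unfolding swN swapN_setp[OF pw'] by (simp add: W[symmetric])

lemma ruleA:
  assumes ca: "c < a"
  shows "delta w \<in> Cl N L r (OutA w p a c \<beta> \<gamma> \<epsilon> \<eta>)"
proof -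
  let ?O = "OutA w p a c \<beta> \<gamma> \<epsilon> \<eta>"
  let ?w' = "swapN p w"
  have q0: "qK N \<noteq> 0" by (rule q_nz)
  have T1: "TCw N p w \<in> Cl N L r ?O"
  proof (rule Cl_fin)
    show "finite (supp (TCw N p w))" using TCw_tens[OF vw p] by (simp add: tens_space_def supp_def)
    show "supp (TCw N p w) \<subseteq> ?O" using TCw_suppA[OF vw p A B ca] unfolding OutA_def by blast
  qed
  have T2: "TCw N p ?w' \<in> Cl N L r ?O"
  proof (rule Cl_fin)
    show "finite (supp (TCw N p ?w'))" using TCw_tens[OF vswN p] by (simp add: tens_space_def supp_def)
    have "supp (TCw N p ?w') \<subseteq> {setp ?w' p (i, \<beta>', \<eta>) (a + c - i, \<gamma>', \<epsilon>) | i \<beta>' \<gamma>'. c \<le> i \<and> i < a \<and> \<beta>' \<in> {\<beta>, \<gamma>} \<and> \<gamma>' \<in> {\<beta>, \<gamma>}}"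
      by (rule TCw_suppA[OF vswN p swN_nth ca])
    also have "\<dots> \<subseteq> ?O" unfolding OutA_def swN setp_setp by blast
    finally show "supp (TCw N p ?w') \<subseteq> ?O" .
  qed
  have S1: "Tsop N p (delta w) \<in> Cl N L r ?O" using rel_gen_Cl[OF vw p] T1 by blast
  have S2: "Tsop N p (delta ?w') \<in> Cl N L r ?O" using rel_gen_Cl[OF vswN p] T2 by blast
  show ?thesis
  proof (cases "\<epsilon> = \<eta>")
    case True
    then have "sc ((qK N)^2) (delta w) + 0 \<in> Cl N L r ?O" using S1 Tsop_delta_eq[OF A B] by simp
    then show ?thesis by (rule Cl_solve[OF _ Cl_zero]) (simp add: q0)
  next
    case ne: False
    show ?thesis
    proof (cases "\<epsilon> < \<eta>")
      case True
      then have "Tsop N p (delta w) = sc (qK N) (delta ?w') + 0" using Tsop_delta_eq[OF A B] by simp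
      then have "sc (qK N) (delta ?w') + 0 \<in> Cl N L r ?O" using S1 by simp
      then have d': "delta ?w' \<in> Cl N L r ?O" by (rule Cl_solve[OF _ Cl_zero]) (rule q0)
      have "Tsop N p (delta ?w') = sc (qK N) (delta w) + sc ((qK N)^2 - 1) (delta ?w')"
        using Tsop_delta_eq[OF swN_nth] True swNN by simp
      then have "sc (qK N) (delta w) + sc ((qK N)^2 - 1) (delta ?w') \<in> Cl N L r ?O" using S2 by simp
      then show ?thesis by (rule Cl_solve[OF _ Cl_sc[OF d']]) (rule q0)
    next
      case False
      then have "\<eta> < \<epsilon>" using ne by simp
      then have "Tsop N p (delta ?w') = sc (qK N) (delta w) + 0"
        using Tsop_delta_eq[OF swN_nth] swNN by simp
      then have "sc (qK N) (delta w) + 0 \<in> Cl N L r ?O" using S2 by simp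
      then show ?thesis by (rule Cl_solve[OF _ Cl_zero]) (rule q0)
    qed
  qed
qed

end


lemma SI_empty1: "SI (a + 1) a i = 0" and SI_empty2: "SI a (a - 1) i = 0"
  unfolding SI_def by auto

context
  fixes N L r :: nat and w :: word and p :: nat and a :: int and \<beta> \<gamma> \<epsilon> \<eta> :: nat
  assumes vw: "valid_word N L r w" and p: "Suc p < r"
    and A: "w ! p = (a, \<beta>, \<epsilon>)" and B: "w ! Suc p = (a, \<gamma>, \<eta>)"
begin

lemma pw5: "Suc p < length w" using vw p by (simp add: valid_word_def)

lemmas ctx_simps5[simp] = setp_nth1[OF pw5] setp_nth2[OF pw5] Rst_setp[OF pw5] Rst_self[OF pw5]

lemma TCw_same:
  assumes "\<beta> = \<gamma>"
  shows "TCw N p w = - delta w"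
proof -
  have "QQ N p w = 0"
  proof
    fix v
    show "QQ N p w v = 0 v"
    proof (cases "Rst w p v")
      case True
      obtain i \<beta>' \<epsilon>' where X: "v ! p = (i, \<beta>', \<epsilon>')" by (cases "v ! p") auto
      obtain i' \<gamma>' \<eta>' where Y: "v ! Suc p = (i', \<gamma>', \<eta>')" by (cases "v ! Suc p") auto
      have G: "Gq (qK N) \<beta> \<gamma> a a i = 0" using assms by (simp add: Gq_def SI_empty1 SI_empty2)
      have "PhiQ (qK N) (a, \<beta>, \<epsilon>) (a, \<gamma>, \<eta>) (i, \<beta>', \<epsilon>') (i', \<gamma>', \<eta>') = 0"
        using G assms by (simp add: PhiQ_def)
      then show ?thesis using True X Y A B by (simp add: QQ_def)
    next
      case False
      then show ?thesis by (simp add: QQ_def)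
    qed
  qed
  then show ?thesis by (simp add: TCw_def)
qed

lemma TCw_gt:
  assumes "\<gamma> < \<beta>"
  shows "TCw N p w = - sc (qK N) (delta (swapc p w))"
proof -
  have pw: "Suc p < length w" by (rule pw5)
  have W: "w = setp w p (a, \<beta>, \<epsilon>) (a, \<gamma>, \<eta>)" by (rule w_setp[OF pw A B])
  have sw: "swapc p w = setp w p (a, \<gamma>, \<epsilon>) (a, \<beta>, \<eta>)"
    by (subst W) (simp add: swapc_setp[OF pw] setp_setp)
  have R1: "Rst w p w" by (rule Rst_self[OF pw])
  have R2: "Rst w p (swapc p w)" unfolding sw by (rule Rst_setp[OF pw])
  have "QQ N p w = delta w - sc (qK N) (delta (swapc p w))"
  proof
    fix v
    show "QQ N p w v = (delta w - sc (qK N) (delta (swapc p w))) v"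
    proof (cases "Rst w p v")
      case True
      obtain i \<beta>' \<epsilon>' where X: "v ! p = (i, \<beta>', \<epsilon>')" by (cases "v ! p") auto
      obtain i' \<gamma>' \<eta>' where Y: "v ! Suc p = (i', \<gamma>', \<eta>')" by (cases "v ! Suc p") auto
      have V: "v = setp w p (i, \<beta>', \<epsilon>') (i', \<gamma>', \<eta>')" using Rst_eq[OF pw True] X Y by simp
      have G: "Gq (qK N) \<beta> \<gamma> a a i = ind (i = a)" using assms by (simp add: Gq_def SI_empty1 SI_empty2)
      have L: "QQ N p w v = PhiQ (qK N) (a, \<beta>, \<epsilon>) (a, \<gamma>, \<eta>) (i, \<beta>', \<epsilon>') (i', \<gamma>', \<eta>')"
        using True X Y A B by (simp add: QQ_def)
      have d1: "delta w v = ind ((i, \<beta>', \<epsilon>') = (a, \<beta>, \<epsilon>) \<and> (i', \<gamma>', \<eta>') = (a, \<gamma>, \<eta>))"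
        unfolding V by (subst W) (simp add: delta_def ind_def setp_inj[OF pw])
      have d2: "delta (swapc p w) v = ind ((i, \<beta>', \<epsilon>') = (a, \<gamma>, \<epsilon>) \<and> (i', \<gamma>', \<eta>') = (a, \<beta>, \<eta>))"
        unfolding V sw by (simp add: delta_def ind_def setp_inj[OF pw])
      show ?thesis unfolding L d1 minus_apply sc_apply d2 PhiQ_def using G assms
        by (auto simp: ind_def)
    next
      case False
      have "v \<noteq> w" "v \<noteq> swapc p w" using False R1 R2 by auto
      then show ?thesis using False by (auto simp: QQ_def delta_def)
    qed
  qed
  then show ?thesis by (simp add: TCw_def)
qed

lemma ruleC0:
  assumes "\<beta> = \<gamma>" "\<epsilon> = \<eta>"
  shows "delta w \<in> Cl N L r S"
proof -
  have "TCw N p w - Tsop N p (delta w) \<in> Cl N L r S" by (rule Cl_rel[OF rel_gen[OF vw p]])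
  moreover have "TCw N p w - Tsop N p (delta w) = sc (- (1 + (qK N)^2)) (delta w) + 0"
    using TCw_same[OF assms(1)] Tsop_delta_eq[OF A B] assms(2)
    by (simp add: fun_eq_iff algebra_simps)
  ultimately have "sc (- (1 + (qK N)^2)) (delta w) + 0 \<in> Cl N L r S" by simp
  then show ?thesis by (rule Cl_solve[OF _ Cl_zero]) (use q2_nz[of N] in simp)
qed

lemma ruleC1:
  assumes "\<beta> = \<gamma>" "\<epsilon> < \<eta>"
  shows "delta w \<in> Cl N L r {swapN p w}"
proof -
  have "TCw N p w - Tsop N p (delta w) \<in> Cl N L r {swapN p w}" by (rule Cl_rel[OF rel_gen[OF vw p]])
  moreover have "TCw N p w - Tsop N p (delta w) = sc (- 1) (delta w) + sc (- qK N) (delta (swapN p w))"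
    using TCw_same[OF assms(1)] Tsop_delta_eq[OF A B] assms(2)
    by (simp add: fun_eq_iff algebra_simps)
  ultimately have "sc (- 1) (delta w) + sc (- qK N) (delta (swapN p w)) \<in> Cl N L r {swapN p w}" by simp
  then show ?thesis by (rule Cl_solve) (auto intro: Cl_sc Cl_delta)
qed

end


lemma ruleB:
  assumes vw: "valid_word N L r w" and p: "Suc p < r"
    and A: "w ! p = (a, \<beta>, \<epsilon>)" and B: "w ! Suc p = (a, \<gamma>, \<eta>)" and gt: "\<gamma> < \<beta>"
  shows "delta w \<in> Cl N L r {swapc p w, swapc p (swapN p w)}"
proof -
  let ?S = "{swapc p w, swapc p (swapN p w)}"
  let ?w' = "swapN p w"
  let ?q = "qK N"
  have q0: "?q \<noteq> 0" by (rule q_nz)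
  have v': "valid_word N L r ?w'" by (rule vswN[OF vw p A B])
  have A': "?w' ! p = (a, \<beta>, \<eta>)" and B': "?w' ! Suc p = (a, \<gamma>, \<epsilon>)" using swN_nth[OF vw p A B] by auto
  have NN: "swapN p ?w' = w" by (rule swNN[OF vw p A B])
  have c1: "delta (swapc p w) \<in> Cl N L r ?S" by (rule Cl_delta) simp
  have c2: "delta (swapc p ?w') \<in> Cl N L r ?S" by (rule Cl_delta) simp
  have R1: "TCw N p w - Tsop N p (delta w) \<in> Cl N L r ?S" by (rule Cl_rel[OF rel_gen[OF vw p]])
  have R2: "TCw N p ?w' - Tsop N p (delta ?w') \<in> Cl N L r ?S" by (rule Cl_rel[OF rel_gen[OF v' p]])
  have T1: "TCw N p w = - sc ?q (delta (swapc p w))" by (rule TCw_gt[OF vw p A B gt])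
  have T2: "TCw N p ?w' = - sc ?q (delta (swapc p ?w'))" by (rule TCw_gt[OF v' p A' B' gt])
  show ?thesis
  proof (cases "\<epsilon> = \<eta>")
    case True
    have "TCw N p w - Tsop N p (delta w) = sc (- ((qK N)^2)) (delta w) + (- sc ?q (delta (swapc p w)))"
      using T1 Tsop_delta_eq[OF A B] True by (simp add: fun_eq_iff algebra_simps)
    then have "sc (- ((qK N)^2)) (delta w) + (- sc ?q (delta (swapc p w))) \<in> Cl N L r ?S" using R1 by simp
    then show ?thesis by (rule Cl_solve[OF _ Cl_uminus[OF Cl_sc[OF c1]]]) (use q0 in simp)
  next
    case ne: False
    show ?thesis
    proof (cases "\<epsilon> < \<eta>")
      case True
      have "TCw N p w - Tsop N p (delta w) = sc (- ?q) (delta ?w') + (- sc ?q (delta (swapc p w)))"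
        using T1 Tsop_delta_eq[OF A B] True by (simp add: fun_eq_iff algebra_simps)
      then have "sc (- ?q) (delta ?w') + (- sc ?q (delta (swapc p w))) \<in> Cl N L r ?S" using R1 by simp
      then have d': "delta ?w' \<in> Cl N L r ?S" by (rule Cl_solve[OF _ Cl_uminus[OF Cl_sc[OF c1]]]) (use q0 in simp)
      have "TCw N p ?w' - Tsop N p (delta ?w') = sc (- ?q) (delta w) + (- sc ?q (delta (swapc p ?w')) - sc ((qK N)^2 - 1) (delta ?w'))"
        using T2 Tsop_delta_eq[OF A' B'] True NN by (simp add: fun_eq_iff algebra_simps)
      then have "sc (- ?q) (delta w) + (- sc ?q (delta (swapc p ?w')) - sc ((qK N)^2 - 1) (delta ?w')) \<in> Cl N L r ?S" using R2 by simp
      then show ?thesis by (rule Cl_solve[OF _ Cl_diff[OF Cl_uminus[OF Cl_sc[OF c2]] Cl_sc[OF d']]]) (use q0 in simp)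
    next
      case False
      then have lt: "\<eta> < \<epsilon>" using ne by simp
      have "TCw N p ?w' - Tsop N p (delta ?w') = sc (- ?q) (delta w) + (- sc ?q (delta (swapc p ?w')))"
        using T2 Tsop_delta_eq[OF A' B'] lt NN by (simp add: fun_eq_iff algebra_simps)
      then have "sc (- ?q) (delta w) + (- sc ?q (delta (swapc p ?w'))) \<in> Cl N L r ?S" using R2 by simp
      then show ?thesis by (rule Cl_solve[OF _ Cl_uminus[OF Cl_sc[OF c2]]]) (use q0 in simp)
    qed
  qed
qed


fun inv_cnt :: "'b::linorder list \<Rightarrow> nat" where
  "inv_cnt [] = 0"
| "inv_cnt (x # xs) = length (filter (\<lambda>y. y < x) xs) + inv_cnt xs"

lemma filter_swap_len:
  "Suc p < length xs \<Longrightarrow> length (filter P (xs[p := xs ! Suc p, Suc p := xs ! p])) = length (filter P xs)"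
proof (induction xs arbitrary: p)
  case Nil then show ?case by simp
next
  case (Cons x xs)
  show ?case
  proof (cases p)
    case 0
    then obtain y zs where "xs = y # zs" using Cons.prems by (cases xs) auto
    then show ?thesis using 0 by simp
  next
    case (Suc p')
    then show ?thesis using Cons by simp
  qed
qed

lemma inv_swap:
  "Suc p < length xs \<Longrightarrow> xs ! Suc p < xs ! p \<Longrightarrow> inv_cnt (xs[p := xs ! Suc p, Suc p := xs ! p]) < inv_cnt xs"
proof (induction xs arbitrary: p)
  case Nil then show ?case by simp
next
  case (Cons x xs)
  show ?case
  proof (cases p)
    case 0
    then obtain y zs where xs: "xs = y # zs" using Cons.prems by (cases xs) auto
    then show ?thesis using 0 Cons.prems by simp
  next
    case (Suc p')
    then have "inv_cnt (xs[p' := xs ! Suc p', Suc p' := xs ! p']) < inv_cnt xs" using Cons by simp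
    moreover have "length (filter (\<lambda>y. y < x) (xs[p' := xs ! Suc p', Suc p' := xs ! p'])) = length (filter (\<lambda>y. y < x) xs)"
      using Cons.prems Suc by (intro filter_swap_len) simp
    ultimately show ?thesis using Suc by simp
  qed
qed

lemma sum_list_upd: "k < length xs \<Longrightarrow> sum_list (xs[k := x]) = sum_list xs + x - xs ! k"
  for xs :: "int list"
proof (induction xs arbitrary: k)
  case Nil then show ?case by simp
next
  case (Cons y ys)
  then show ?case by (cases k) auto
qed

lemma filter_len_upd: "k < length xs \<Longrightarrow>
  length (filter P (xs[k := x])) + (if P (xs ! k) then 1 else 0) = length (filter P xs) + (if P x then 1 else 0)"
proof (induction xs arbitrary: k)
  case Nil then show ?case by simp
next
  case (Cons y ys)
  then show ?case by (cases k) auto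
qed

definition en :: "word \<Rightarrow> nat" where "en w = nat (sum_list (map (\<lambda>x. (fst x)^2) w))"
definition ei :: "word \<Rightarrow> nat" where "ei w = inv_cnt (map fst w)"
definition bi :: "word \<Rightarrow> nat" where "bi w = inv_cnt (map (\<lambda>x. fst (snd x)) w)"
definition di :: "word \<Rightarrow> nat" where "di w = inv_cnt (map (\<lambda>x. - int (snd (snd x))) w)"

definition meas :: "word \<Rightarrow> nat \<times> nat \<times> nat \<times> nat" where "meas w = (en w, ei w, bi w, di w)"

definition mrel :: "(word \<times> word) set" where
  "mrel = inv_image (less_than <*lex*> less_than <*lex*> less_than <*lex*> less_than) meas"

lemma wf_mrel: "wf mrel" unfolding mrel_def by auto

lemma map_setp: "Suc p < length w \<Longrightarrow> map f (setp w p X Y) = (map f w)[p := f X, Suc p := f Y]"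
  by (simp add: setp_def map_update)

lemma sum_setp: fixes g :: "_ \<Rightarrow> int" assumes "Suc p < length w"
  shows "sum_list (map g (setp w p X Y)) = sum_list (map g w) - g (w ! p) - g (w ! Suc p) + g X + g Y"
proof -
  have "sum_list (map g (setp w p X Y)) = sum_list ((map g w)[p := g X, Suc p := g Y])"
    using map_setp[OF assms, of g X Y] by simp
  also have "\<dots> = sum_list ((map g w)[p := g X]) + g Y - (map g w)[p := g X] ! Suc p"
    using assms by (simp add: sum_list_upd)
  also have "\<dots> = sum_list (map g w) - g (w ! p) - g (w ! Suc p) + g X + g Y"
    using assms by (simp add: sum_list_upd)
  finally show ?thesis .
qed

lemma en_nonneg: "0 \<le> sum_list (map (\<lambda>x. (fst x)^2) (w::word))"
  by (induction w) auto

lemma meas_en: assumes "Suc p < length w"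
  "(fst X)^2 + (fst Y)^2 < (fst (w ! p))^2 + (fst (w ! Suc p))^2"
  shows "(setp w p X Y, w) \<in> mrel"
proof -
  have "sum_list (map (\<lambda>x. (fst x)^2) (setp w p X Y)) < sum_list (map (\<lambda>x. (fst x)^2) w)"
    using sum_setp[OF assms(1), of "\<lambda>x. (fst x)^2"] assms(2) by simp
  then have "en (setp w p X Y) < en w" unfolding en_def using en_nonneg[of "setp w p X Y"] by simp
  then show ?thesis unfolding mrel_def meas_def by simp
qed

lemma swap_is_setp: "Suc p < length w \<Longrightarrow> (map f w)[p := f (w ! Suc p), Suc p := f (w ! p)] = map f (setp w p (w ! Suc p) (w ! p))"
  by (simp add: map_setp)

lemma inv_setp_swap:
  assumes "Suc p < length w" "f (fst X) = f (fst (w ! Suc p))" "f (fst Y) = f (fst (w ! p))"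
    "f (fst (w ! Suc p)) < f (fst (w ! p))"
  shows "inv_cnt (map (f o fst) (setp w p X Y)) < inv_cnt (map (f o fst) w)"
proof -
  have "map (f o fst) (setp w p X Y) = (map (f o fst) w)[p := (map (f o fst) w) ! Suc p, Suc p := (map (f o fst) w) ! p]"
    using assms by (simp add: map_setp)
  then show ?thesis using inv_swap[of p "map (f o fst) w"] assms by simp
qed


lemma kidx_lt:
  assumes N: "1 \<le> N" and L: "1 \<le> L"
    and vA: "ventry N L (a, \<beta>, \<epsilon>)" and vB: "ventry N L (c, \<gamma>, \<eta>)"
    and o: "a < c \<or> (a = c \<and> (\<beta> < \<gamma> \<or> (\<beta> = \<gamma> \<and> \<eta> < \<epsilon>)))"
  shows "kidx N L (c, \<gamma>, \<eta>) < kidx N L (a, \<beta>, \<epsilon>)"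
proof -
  have r: "1 \<le> \<beta>" "\<beta> \<le> L" "1 \<le> \<epsilon>" "\<epsilon> \<le> N" "1 \<le> \<gamma>" "\<gamma> \<le> L" "1 \<le> \<eta>" "\<eta> \<le> N"
    using vA vB by (auto simp: ventry_def)
  have kA: "kidx N L (a, \<beta>, \<epsilon>) = int \<epsilon> - int N * int \<beta> - int N * int L * a" by (simp add: kidx_def algebra_simps)
  have kB: "kidx N L (c, \<gamma>, \<eta>) = int \<eta> - int N * int \<gamma> - int N * int L * c" by (simp add: kidx_def algebra_simps)
  show ?thesis
  proof (cases "a < c")
    case True
    have f1: "int N * int L * (a + 1) \<le> int N * int L * c" using True by (intro mult_left_mono) auto
    have f2: "int N * int \<beta> \<le> int N * int L" using r by (intro mult_left_mono) auto
    have f3: "int N * 1 \<le> int N * int \<gamma>" using r by (intro mult_left_mono) auto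
    have f4: "int N * int L * (a + 1) = int N * int L * a + int N * int L" by (simp add: algebra_simps)
    show ?thesis unfolding kA kB using f1 f2 f3 f4 r by linarith
  next
    case False
    then have ac: "a = c" and o2: "\<beta> < \<gamma> \<or> (\<beta> = \<gamma> \<and> \<eta> < \<epsilon>)" using o by auto
    show ?thesis
    proof (cases "\<beta> < \<gamma>")
      case True
      have f1: "int N * (int \<beta> + 1) \<le> int N * int \<gamma>" using True by (intro mult_left_mono) auto
      have f2: "int N * (int \<beta> + 1) = int N * int \<beta> + int N" by (simp add: algebra_simps)
      have f3: "int N * int L * a = int N * int L * c" using ac by simp
      show ?thesis unfolding kA kB using f1 f2 f3 r by linarith
    next
      case False
      then have "\<beta> = \<gamma>" "\<eta> < \<epsilon>" using o2 by auto
      then show ?thesis unfolding kA kB using ac by simp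
    qed
  qed
qed

lemma kunder_formula:
  assumes "1 \<le> N" "1 \<le> L"
  shows "kunder N L k = (- k) div (int N * int L)"
proof -
  define t where "t = - ((k - 1) div int N)"
  have kb: "kbar N k - k = int N * t"
  proof -
    have "k - 1 = int N * ((k - 1) div int N) + (k - 1) mod int N" by simp
    then show ?thesis unfolding kbar_def t_def by (simp add: algebra_simps)
  qed
  have Npos: "int N > 0" using assms by simp
  have t1: "(kbar N k - k) div int N = t" unfolding kb using Npos by simp
  have kd: "kdot N L k = (t - 1) mod int L + 1" unfolding kdot_def t1 ..
  have ku: "kunder N L k = (t - 1) div int L"
  proof -
    have "t - 1 = int L * ((t - 1) div int L) + (t - 1) mod int L" by simp
    then have "t - kdot N L k = int L * ((t - 1) div int L)" unfolding kd by (simp add: algebra_simps)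
    then show ?thesis unfolding kunder_def t1 using assms by simp
  qed
  have t2: "t - 1 = (- k) div int N"
  proof -
    have x: "k - 1 = int N * ((k - 1) div int N) + (k - 1) mod int N" by simp
    have "(- k) div int N = - ((k - 1) div int N) - 1"
    proof (rule int_div_pos_eq[where r = "int N - 1 - (k - 1) mod int N"])
      show "- k = int N * (- ((k - 1) div int N) - 1) + (int N - 1 - (k - 1) mod int N)"
        using x by (simp add: algebra_simps)
      show "0 \<le> int N - 1 - (k - 1) mod int N" using pos_mod_bound[OF Npos, of "k - 1"] by linarith
      show "int N - 1 - (k - 1) mod int N < int N" using pos_mod_sign[OF Npos, of "k - 1"] by linarith
    qed
    then show ?thesis unfolding t_def by simp
  qed
  show ?thesis unfolding ku t2 by (simp add: zdiv_zmult2_eq[symmetric] mult.commute) 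
qed


definition normal :: "nat \<Rightarrow> nat \<Rightarrow> word \<Rightarrow> bool" where
  "normal N L w \<longleftrightarrow> (\<forall>i. Suc i < length w \<longrightarrow> kidx N L (w ! Suc i) < kidx N L (w ! i))"

definition Pm :: "int \<Rightarrow> nat \<Rightarrow> word \<Rightarrow> bool" where
  "Pm m t w \<longleftrightarrow> (\<forall>x\<in>set (map fst w). x \<le> m) \<and> length (filter (\<lambda>x. x = m) (map fst w)) < t"

definition GW :: "nat \<Rightarrow> nat \<Rightarrow> nat \<Rightarrow> int \<Rightarrow> nat \<Rightarrow> word set" where
  "GW N L r m t = {v. valid_word N L r v \<and> normal N L v \<and> Pm m t v}"

lemma map_setp_same: "Suc p < length w \<Longrightarrow> h X = h (w ! p) \<Longrightarrow> h Y = h (w ! Suc p) \<Longrightarrow> map h (setp w p X Y) = map h w"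
proof -
  assume a: "Suc p < length w" "h X = h (w ! p)" "h Y = h (w ! Suc p)"
  have 1: "(map h w)[p := h (w ! p)] = map h w" using a(1) by (metis Suc_lessD list_update_id nth_map)
  have 2: "(map h w)[Suc p := h (w ! Suc p)] = map h w" using a(1) by (metis list_update_id nth_map)
  show ?thesis using a 1 2 by (simp add: map_setp)
qed

lemma inv_setp_gen:
  assumes "Suc p < length w" "h X = h (w ! Suc p)" "h Y = h (w ! p)" "h (w ! Suc p) < h (w ! p)"
  shows "inv_cnt (map h (setp w p X Y)) < inv_cnt (map h w)"
proof -
  have "map h (setp w p X Y) = (map h w)[p := (map h w) ! Suc p, Suc p := (map h w) ! p]"
    using assms by (simp add: map_setp)
  then show ?thesis using inv_swap[of p "map h w"] assms by simp
qed

lemma en_map: "map fst v = map fst w \<Longrightarrow> en v = en w"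
proof -
  assume a: "map fst v = map fst w"
  have "map (\<lambda>x. (fst x)^2) v = map (\<lambda>y. y^2) (map fst v)" by simp
  also have "\<dots> = map (\<lambda>x. (fst x)^2) w" using a by simp
  finally show ?thesis by (simp add: en_def)
qed

lemma mrel_en: "en v < en w \<Longrightarrow> (v, w) \<in> mrel" by (simp add: mrel_def meas_def)
lemma mrel_ei: "en v = en w \<Longrightarrow> ei v < ei w \<Longrightarrow> (v, w) \<in> mrel" by (simp add: mrel_def meas_def)
lemma mrel_bi: "map fst v = map fst w \<Longrightarrow> bi v < bi w \<Longrightarrow> (v, w) \<in> mrel"
  using en_map[of v w] by (simp add: mrel_def meas_def ei_def)
lemma mrel_di: "map fst v = map fst w \<Longrightarrow> map (\<lambda>x. fst (snd x)) v = map (\<lambda>x. fst (snd x)) w \<Longrightarrow> di v < di w \<Longrightarrow> (v, w) \<in> mrel"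
  using en_map[of v w] by (simp add: mrel_def meas_def ei_def bi_def)

lemma Pm_map: "map fst v = map fst w \<Longrightarrow> Pm m t v = Pm m t w"
  by (simp add: Pm_def)

lemma filter_setp: assumes "Suc p < length xs"
  shows "length (filter P (xs[p := x, Suc p := y])) + (if P (xs ! p) then 1 else 0) + (if P (xs ! Suc p) then 1 else 0)
    = length (filter P xs) + (if P x then 1 else 0) + (if P y then 1 else 0)"
proof -
  have 1: "length (filter P (xs[p := x])) + (if P (xs ! p) then 1 else 0) = length (filter P xs) + (if P x then 1 else 0)"
    using assms by (intro filter_len_upd) simp
  have 2: "length (filter P (xs[p := x, Suc p := y])) + (if P (xs[p := x] ! Suc p) then 1 else 0) = length (filter P (xs[p := x])) + (if P y then 1 else 0)"
    using assms by (intro filter_len_upd) simp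
  have 3: "xs[p := x] ! Suc p = xs ! Suc p" by simp
  show ?thesis using 1 2[unfolded 3] by linarith
qed

context
  fixes N L r :: nat and m :: int and t :: nat
  assumes N: "1 \<le> N" and L: "1 \<le> L"
begin

lemma straighten: "valid_word N L r w \<Longrightarrow> Pm m t w \<Longrightarrow> delta w \<in> Cl N L r (GW N L r m t)"
proof (induction w rule: wf_induct[OF wf_mrel])
  case (1 w)
  note IH = 1(1) and vw = 1(2) and Pw = 1(3)
  have lw: "length w = r" using vw by (simp add: valid_word_def)
  show ?case
  proof (cases "normal N L w")
    case True
    then show ?thesis using vw Pw by (intro Cl_delta) (simp add: GW_def)
  next
    case False
    then obtain p where p: "Suc p < r" and nk: "\<not> kidx N L (w ! Suc p) < kidx N L (w ! p)"
      unfolding normal_def lw by blast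
    obtain a \<beta> \<epsilon> where A: "w ! p = (a, \<beta>, \<epsilon>)" by (cases "w ! p") auto
    obtain c \<gamma> \<eta> where B: "w ! Suc p = (c, \<gamma>, \<eta>)" by (cases "w ! Suc p") auto
    have pw: "Suc p < length w" using p lw by simp
    have vA: "ventry N L (a, \<beta>, \<epsilon>)" using valid_nth[OF vw, of p] A p by simp
    have vB: "ventry N L (c, \<gamma>, \<eta>)" using valid_nth[OF vw, of "Suc p"] B p by simp
    have rA: "1 \<le> \<beta>" "\<beta> \<le> L" "1 \<le> \<epsilon>" "\<epsilon> \<le> N" using vA by (auto simp: ventry_def)
    have rB: "1 \<le> \<gamma>" "\<gamma> \<le> L" "1 \<le> \<eta>" "\<eta> \<le> N" using vB by (auto simp: ventry_def)
    have no: "\<not> (a < c \<or> (a = c \<and> (\<beta> < \<gamma> \<or> (\<beta> = \<gamma> \<and> \<eta> < \<epsilon>))))"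
      using kidx_lt[OF N L vA vB] nk A B by auto
    have fA: "fst (w ! p) = a" and fB: "fst (w ! Suc p) = c" using A B by auto
    have am: "a \<le> m" using Pw pw fA unfolding Pm_def by (metis in_set_conv_nth length_map nth_map Suc_lessD)
      have ok: "delta v \<in> Cl N L r (GW N L r m t)" if "(v, w) \<in> mrel" "valid_word N L r v" "Pm m t v" for v
      using IH that by blast
    show ?thesis
    proof (cases "c < a")
      case ca: True
      show ?thesis
      proof (rule Cl_trans[OF _ ruleA[OF vw p A B ca]])
        fix v assume "v \<in> OutA w p a c \<beta> \<gamma> \<epsilon> \<eta>"
        then obtain i \<beta>' \<gamma>' \<epsilon>' \<eta>' where v: "v = setp w p (i, \<beta>', \<epsilon>') (a + c - i, \<gamma>', \<eta>')"
          and ci: "c \<le> i" "i < a" and bb: "\<beta>' \<in> {\<beta>, \<gamma>}" "\<gamma>' \<in> {\<beta>, \<gamma>}"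
          and ee: "(\<epsilon>' = \<epsilon> \<and> \<eta>' = \<eta>) \<or> (\<epsilon>' = \<eta> \<and> \<eta>' = \<epsilon>)"
          unfolding OutA_def by blast
        have vv: "valid_word N L r v" unfolding v
          using rA rB bb ee by (intro valid_setp[OF vw p]) (auto simp: ventry_def)
        have mf: "map fst v = (map fst w)[p := i, Suc p := a + c - i]" unfolding v using map_setp[OF pw, of fst] by simp
        have Pv: "Pm m t v"
        proof -
          have s1: "\<forall>x\<in>set (map fst v). x \<le> m"
          proof
            fix x assume "x \<in> set (map fst v)"
            then have "x \<in> insert (a + c - i) (insert i (set (map fst w)))" unfolding mf
              by (meson set_update_subset_insert insert_mono subsetD)
            then show "x \<le> m" using Pw am ci unfolding Pm_def by auto
          qed
          have "length (filter (\<lambda>x. x = m) (map fst v)) + (if a = m then 1 else 0) + (if c = m then 1 else 0)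
              = length (filter (\<lambda>x. x = m) (map fst w)) + (if i = m then 1 else 0) + (if a + c - i = m then 1 else 0)"
            unfolding mf using filter_setp[of p "map fst w" "\<lambda>x. x = m" i "a + c - i"] pw fA fB by simp
          moreover have "(if i = m then 1 else 0) = (0::nat)" using ci am by simp
          moreover have "(if a + c - i = m then 1 else (0::nat)) \<le> (if a = m then 1 else 0)" using ci am by auto
          ultimately have "length (filter (\<lambda>x. x = m) (map fst v)) \<le> length (filter (\<lambda>x. x = m) (map fst w))" by linarith
          then show ?thesis using s1 Pw unfolding Pm_def by simp
        qed
        have mv: "(v, w) \<in> mrel"
        proof (cases "c < i")
          case True
          have "i^2 + (a + c - i)^2 < a^2 + c^2"
          proof -
            have "i^2 + (a + c - i)^2 - (a^2 + c^2) = 2 * ((i - a) * (i - c))" by (simp add: power2_eq_square algebra_simps)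
            moreover have "(i - a) * (i - c) < 0" using True ci by (simp add: mult_neg_pos)
            ultimately show ?thesis by linarith
          qed
          then show ?thesis unfolding v by (intro meas_en[OF pw]) (simp add: fA fB)
        next
          case False
          then have ic: "i = c" using ci by simp
          have "en v = en w"
          proof -
            have "sum_list (map (\<lambda>x. (fst x)^2) v) = sum_list (map (\<lambda>x. (fst x)^2) w)"
              unfolding v using sum_setp[OF pw, of "\<lambda>x. (fst x)^2"] fA fB ic by simp
            then show ?thesis by (simp add: en_def)
          qed
          moreover have "ei v < ei w" unfolding ei_def v
            using inv_setp_gen[OF pw, of fst] fA fB ic ca by simp
          ultimately show ?thesis by (rule mrel_ei)
        qed
        show "delta v \<in> Cl N L r (GW N L r m t)" by (rule ok[OF mv vv Pv])
      qed
    next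
      case False
      then have ac: "a = c" using no by simp
      have B': "w ! Suc p = (a, \<gamma>, \<eta>)" using B ac by simp
      show ?thesis
      proof (cases "\<gamma> < \<beta>")
        case gt: True
        show ?thesis
        proof (rule Cl_trans[OF _ ruleB[OF vw p A B' gt]])
          fix v assume "v \<in> {swapc p w, swapc p (swapN p w)}"
          then have v: "v = setp w p (a, \<gamma>, \<epsilon>) (a, \<beta>, \<eta>) \<or> v = setp w p (a, \<gamma>, \<eta>) (a, \<beta>, \<epsilon>)"
            using swC[OF vw p A B'] swN[OF vw p A B'] swapc_setp[OF pw] by auto
          have vv: "valid_word N L r v" using v rA rB
            by (auto intro!: valid_setp[OF vw p] simp: ventry_def)
          have mf: "map fst v = map fst w" using v map_setp_same[OF pw, of fst] fA fB ac by auto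
          have "bi v < bi w" unfolding bi_def using v inv_setp_gen[OF pw, of "\<lambda>x. fst (snd x)"] A B gt by auto
          then have mv: "(v, w) \<in> mrel" by (rule mrel_bi[OF mf])
          have Pv: "Pm m t v" using Pm_map[OF mf] Pw by simp
          show "delta v \<in> Cl N L r (GW N L r m t)" by (rule ok[OF mv vv Pv])
        qed
      next
        case ngt: False
        then have bg: "\<beta> = \<gamma>" and le: "\<epsilon> \<le> \<eta>" using no ac by auto
        show ?thesis
        proof (cases "\<epsilon> = \<eta>")
          case True
          show ?thesis by (rule ruleC0[OF vw p A B' bg True])
        next
          case False
          then have lt: "\<epsilon> < \<eta>" using le by simp
          show ?thesis
          proof (rule Cl_trans[OF _ ruleC1[OF vw p A B' bg lt]])
            fix v assume "v \<in> {swapN p w}"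
            then have v: "v = setp w p (a, \<beta>, \<eta>) (a, \<gamma>, \<epsilon>)" using swN[OF vw p A B'] by simp
            have vv: "valid_word N L r v" unfolding v using rA rB
              by (intro valid_setp[OF vw p]) (auto simp: ventry_def)
            have mf: "map fst v = map fst w" using v map_setp_same[OF pw, of fst] fA fB ac by auto
            have mb: "map (\<lambda>x. fst (snd x)) v = map (\<lambda>x. fst (snd x)) w"
              using v map_setp_same[OF pw, of "\<lambda>x. fst (snd x)"] A B bg by auto
            have "di v < di w" unfolding di_def using v inv_setp_gen[OF pw, of "\<lambda>x. - int (snd (snd x))"] A B lt by auto
            then have mv: "(v, w) \<in> mrel" by (rule mrel_di[OF mf mb])
            have Pv: "Pm m t v" using Pm_map[OF mf] Pw by simp
            show "delta v \<in> Cl N L r (GW N L r m t)" by (rule ok[OF mv vv Pv])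
          qed
        qed
      qed
    qed
  qed
qed

end


lemma fspan_empty: "fspan {} = {0}"
  unfolding fspan_def by auto

lemma Cl_empty: "f \<in> Cl N L r {} \<Longrightarrow> f \<in> rel_space N L r"
  unfolding Cl_def by (simp add: fspan_empty)

definition tau :: "nat \<Rightarrow> nat \<Rightarrow> nat" where
  "tau p i = (if i = p then Suc p else if i = Suc p then p else i)"

lemma tau_tau[simp]: "tau p (tau p i) = i" by (simp add: tau_def)

lemma card_tau:
  assumes "n \<le> p" "Suc p < r" "\<And>i. i < r \<Longrightarrow> g i = h (tau p i)"
  shows "card {i. n \<le> i \<and> i < r \<and> g i = j} = card {i. n \<le> i \<and> i < r \<and> h i = j}"
proof -
  have "{i. n \<le> i \<and> i < r \<and> g i = j} = tau p ` {i. n \<le> i \<and> i < r \<and> h i = j}"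
  proof
    show "{i. n \<le> i \<and> i < r \<and> g i = j} \<subseteq> tau p ` {i. n \<le> i \<and> i < r \<and> h i = j}"
    proof
      fix i assume i: "i \<in> {i. n \<le> i \<and> i < r \<and> g i = j}"
      then have "tau p i \<in> {i. n \<le> i \<and> i < r \<and> h i = j}" using assms by (auto simp: tau_def)
      then show "i \<in> tau p ` {i. n \<le> i \<and> i < r \<and> h i = j}" by (metis image_eqI tau_tau)
    qed
  next
    show "tau p ` {i. n \<le> i \<and> i < r \<and> h i = j} \<subseteq> {i. n \<le> i \<and> i < r \<and> g i = j}"
    proof
      fix i assume "i \<in> tau p ` {i. n \<le> i \<and> i < r \<and> h i = j}"
      then obtain i0 where i0: "n \<le> i0" "i0 < r" "h i0 = j" and i: "i = tau p i0" by blast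
      have "i < r" "n \<le> i" using i0 assms(1,2) by (auto simp: i tau_def)
      moreover have "g i = j" using assms(3)[OF \<open>i < r\<close>] i i0 by simp
      ultimately show "i \<in> {i. n \<le> i \<and> i < r \<and> g i = j}" by simp
    qed
  qed
  moreover have "inj_on (tau p) X" for X by (metis inj_onI tau_tau)
  ultimately show ?thesis by (simp add: card_image)
qed

lemma nth_setp_other: "Suc p < length w \<Longrightarrow> i \<noteq> p \<Longrightarrow> i \<noteq> Suc p \<Longrightarrow> setp w p X Y ! i = w ! i"
  by (simp add: setp_def)

lemma strict_chain:
  fixes f :: "nat \<Rightarrow> 'a::linorder"
  assumes "\<And>q. n \<le> q \<Longrightarrow> Suc q < r \<Longrightarrow> f q < f (Suc q)"
  shows "n \<le> i \<Longrightarrow> i < i' \<Longrightarrow> i' < r \<Longrightarrow> f i < f i'"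
proof (induction i')
  case 0 then show ?case by simp
next
  case (Suc k)
  show ?case
  proof (cases "i = k")
    case True then show ?thesis using assms Suc.prems by simp
  next
    case False
    then have "f i < f k" using Suc by simp
    moreover have "f k < f (Suc k)" using assms Suc.prems False by simp
    ultimately show ?thesis by (rule less_trans)
  qed
qed

definition Qb :: "nat \<Rightarrow> nat \<Rightarrow> nat \<Rightarrow> nat \<Rightarrow> int \<Rightarrow> nat \<Rightarrow> nat \<Rightarrow> word \<Rightarrow> bool" where
  "Qb N L r n m c j w \<longleftrightarrow> valid_word N L r w \<and> n \<le> r \<and>
     (\<forall>i. n \<le> i \<and> i < r \<longrightarrow> fst (w ! i) = m) \<and>
     (\<forall>i. n \<le> i \<and> i < r \<longrightarrow> N - c + 1 \<le> snd (snd (w ! i))) \<and>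
     c < card {i. n \<le> i \<and> i < r \<and> fst (snd (w ! i)) = j}"

context
  fixes N L r n :: nat and m :: int and c j :: nat
  assumes N: "1 \<le> N" and L: "1 \<le> L" and cN: "c \<le> N"
begin

lemma terminal_false:
  assumes Q: "Qb N L r n m c j w"
    and ord: "\<And>q. n \<le> q \<Longrightarrow> Suc q < r \<Longrightarrow>
      fst (snd (w ! q)) < fst (snd (w ! Suc q)) \<or>
      (fst (snd (w ! q)) = fst (snd (w ! Suc q)) \<and> snd (snd (w ! Suc q)) < snd (snd (w ! q)))"
  shows False
proof -
  have vw: "valid_word N L r w" using Q by (simp add: Qb_def)
  define be where "be i = fst (snd (w ! i))" for i
  define ep where "ep i = snd (snd (w ! i))" for i
  define kap where "kap i = int (be i) * (int N + 1) - int (ep i)" for i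
  have rng: "1 \<le> ep i \<and> ep i \<le> N" if "i < r" for i
    using valid_nth[OF vw that] by (simp add: ventry_def ep_def)
  have step: "kap q < kap (Suc q)" if "n \<le> q" "Suc q < r" for q
  proof -
    have r1: "1 \<le> ep q \<and> ep q \<le> N" "1 \<le> ep (Suc q) \<and> ep (Suc q) \<le> N" using rng that by auto
    from ord[OF that] have "be q < be (Suc q) \<or> (be q = be (Suc q) \<and> ep (Suc q) < ep q)"
      by (simp add: be_def ep_def)
    then show ?thesis
    proof
      assume "be q < be (Suc q)"
      then have "(int (be q) + 1) * (int N + 1) \<le> int (be (Suc q)) * (int N + 1)" by (intro mult_right_mono) auto
      then have "int (be q) * (int N + 1) + int N + 1 \<le> int (be (Suc q)) * (int N + 1)" by (simp add: algebra_simps)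
      then show ?thesis unfolding kap_def using r1 by linarith
    next
      assume "be q = be (Suc q) \<and> ep (Suc q) < ep q"
      then show ?thesis unfolding kap_def using r1 by simp
    qed
  qed
  let ?S = "{i. n \<le> i \<and> i < r \<and> fst (snd (w ! i)) = j}"
  have inj: "inj_on ep ?S"
  proof (rule inj_onI)
    fix i i' assume i: "i \<in> ?S" and i': "i' \<in> ?S" and e: "ep i = ep i'"
    have "kap i = kap i'" using i i' e by (simp add: kap_def be_def)
    show "i = i'"
    proof (rule ccontr)
      assume "i \<noteq> i'"
      then have "i < i' \<or> i' < i" by auto
      then have "kap i < kap i' \<or> kap i' < kap i"
        using strict_chain[of n r kap, OF step] i i' by auto
      then show False using \<open>kap i = kap i'\<close> by simp
    qed
  qed
  have sub: "ep ` ?S \<subseteq> {N - c + 1..N}" using Q rng unfolding Qb_def ep_def by auto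
  have "card ?S \<le> card {N - c + 1..N}" by (rule card_inj_on_le[OF inj sub]) simp
  also have "\<dots> = c" using cN by simp
  finally show False using Q by (simp add: Qb_def)
qed

lemma block_zero: "Qb N L r n m c j w \<Longrightarrow> delta w \<in> Cl N L r {}"
proof (induction w rule: wf_induct[OF wf_mrel])
  case (1 w)
  note IH = 1(1) and Q = 1(2)
  have vw: "valid_word N L r w" using Q by (simp add: Qb_def)
  have lw: "length w = r" using vw by (simp add: valid_word_def)
  show ?case
  proof (cases "\<forall>q. n \<le> q \<and> Suc q < r \<longrightarrow>
      fst (snd (w ! q)) < fst (snd (w ! Suc q)) \<or>
      (fst (snd (w ! q)) = fst (snd (w ! Suc q)) \<and> snd (snd (w ! Suc q)) < snd (snd (w ! q)))")
    case True
    then have False using terminal_false[OF Q] by blast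
    then show ?thesis ..
  next
    case False
    then obtain p where np: "n \<le> p" and p: "Suc p < r" and
      nord: "\<not> (fst (snd (w ! p)) < fst (snd (w ! Suc p)) \<or>
      (fst (snd (w ! p)) = fst (snd (w ! Suc p)) \<and> snd (snd (w ! Suc p)) < snd (snd (w ! p))))" by blast
    obtain a \<beta> \<epsilon> where A: "w ! p = (a, \<beta>, \<epsilon>)" by (cases "w ! p") auto
    obtain c' \<gamma> \<eta> where B0: "w ! Suc p = (c', \<gamma>, \<eta>)" by (cases "w ! Suc p") auto
    have pw: "Suc p < length w" using p lw by simp
    have am: "a = m" using Q np p A unfolding Qb_def by (metis Suc_lessD fst_conv)
    have cm: "c' = m" using Q np p B0 unfolding Qb_def by (metis le_SucI fst_conv)
    have B: "w ! Suc p = (a, \<gamma>, \<eta>)" using B0 am cm by simp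
    have vA: "ventry N L (a, \<beta>, \<epsilon>)" using valid_nth[OF vw, of p] A p by simp
    have vB: "ventry N L (a, \<gamma>, \<eta>)" using valid_nth[OF vw, of "Suc p"] B p by simp
    have rA: "1 \<le> \<beta>" "\<beta> \<le> L" "1 \<le> \<epsilon>" "\<epsilon> \<le> N" using vA by (auto simp: ventry_def)
    have rB: "1 \<le> \<gamma>" "\<gamma> \<le> L" "1 \<le> \<eta>" "\<eta> \<le> N" using vB by (auto simp: ventry_def)
    have eA: "N - c + 1 \<le> \<epsilon>" using Q np p A unfolding Qb_def by (metis Suc_lessD snd_conv)
    have eB: "N - c + 1 \<le> \<eta>" using Q np p B unfolding Qb_def by (metis le_SucI snd_conv)
    have no: "\<not> (\<beta> < \<gamma> \<or> (\<beta> = \<gamma> \<and> \<eta> < \<epsilon>))" using nord A B by simp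
    have ok: "delta v \<in> Cl N L r {}" if "(v, w) \<in> mrel" "Qb N L r n m c j v" for v
      using IH that by blast
    have Qout: "Qb N L r n m c j (setp w p (a, \<beta>', \<epsilon>') (a, \<gamma>', \<eta>'))"
      if bb: "(\<beta>' = \<beta> \<and> \<gamma>' = \<gamma>) \<or> (\<beta>' = \<gamma> \<and> \<gamma>' = \<beta>)"
      and ee: "(\<epsilon>' = \<epsilon> \<and> \<eta>' = \<eta>) \<or> (\<epsilon>' = \<eta> \<and> \<eta>' = \<epsilon>)" for \<beta>' \<gamma>' \<epsilon>' \<eta>'
    proof -
      let ?v = "setp w p (a, \<beta>', \<epsilon>') (a, \<gamma>', \<eta>')"
      have vv: "valid_word N L r ?v" using rA rB bb ee
        by (intro valid_setp[OF vw p]) (auto simp: ventry_def)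
      have nth: "?v ! i = (if i = p then (a, \<beta>', \<epsilon>') else if i = Suc p then (a, \<gamma>', \<eta>') else w ! i)" for i
        using pw by (simp add: setp_def nth_list_update)
      have ex: "\<forall>i. n \<le> i \<and> i < r \<longrightarrow> fst (?v ! i) = m" using Q am unfolding Qb_def nth by auto
      have ee2: "\<forall>i. n \<le> i \<and> i < r \<longrightarrow> N - c + 1 \<le> snd (snd (?v ! i))"
        using Q eA eB ee unfolding Qb_def nth by auto
      have "card {i. n \<le> i \<and> i < r \<and> fst (snd (?v ! i)) = j} = card {i. n \<le> i \<and> i < r \<and> fst (snd (w ! i)) = j}"
      proof (cases "\<beta>' = \<beta> \<and> \<gamma>' = \<gamma>")
        case True
        then have "fst (snd (?v ! i)) = fst (snd (w ! i))" for i unfolding nth using A B by auto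
        then show ?thesis by simp
      next
        case False
        then have sw: "\<beta>' = \<gamma> \<and> \<gamma>' = \<beta>" using bb by auto
        show ?thesis
        proof (rule card_tau[OF np p])
          fix i assume "i < r"
          show "fst (snd (?v ! i)) = fst (snd (w ! tau p i))" unfolding nth tau_def using A B sw by auto
        qed
      qed
      then show ?thesis using vv ex ee2 Q unfolding Qb_def by simp
    qed
    show ?thesis
    proof (cases "\<gamma> < \<beta>")
      case gt: True
      show ?thesis
      proof (rule Cl_trans[OF _ ruleB[OF vw p A B gt]])
        fix v assume "v \<in> {swapc p w, swapc p (swapN p w)}"
        then have v: "v = setp w p (a, \<gamma>, \<epsilon>) (a, \<beta>, \<eta>) \<or> v = setp w p (a, \<gamma>, \<eta>) (a, \<beta>, \<epsilon>)"
          using swC[OF vw p A B] swN[OF vw p A B] swapc_setp[OF pw] by auto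
        have Qv: "Qb N L r n m c j v" using v Qout by auto
        have mf: "map fst v = map fst w" using v map_setp_same[OF pw, of fst] A B by auto
        have "bi v < bi w" unfolding bi_def using v inv_setp_gen[OF pw, of "\<lambda>x. fst (snd x)"] A B gt by auto
        then have mv: "(v, w) \<in> mrel" by (rule mrel_bi[OF mf])
        show "delta v \<in> Cl N L r {}" by (rule ok[OF mv Qv])
      qed
    next
      case ngt: False
      then have bg: "\<beta> = \<gamma>" and le: "\<epsilon> \<le> \<eta>" using no by auto
      show ?thesis
      proof (cases "\<epsilon> = \<eta>")
        case True
        show ?thesis by (rule ruleC0[OF vw p A B bg True])
      next
        case False
        then have lt: "\<epsilon> < \<eta>" using le by simp
        show ?thesis
        proof (rule Cl_trans[OF _ ruleC1[OF vw p A B bg lt]])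
          fix v assume "v \<in> {swapN p w}"
          then have v: "v = setp w p (a, \<beta>, \<eta>) (a, \<gamma>, \<epsilon>)" using swN[OF vw p A B] by simp
          have Qv: "Qb N L r n m c j v" unfolding v using Qout bg by auto
          have mf: "map fst v = map fst w" using v map_setp_same[OF pw, of fst] A B by auto
          have mb: "map (\<lambda>x. fst (snd x)) v = map (\<lambda>x. fst (snd x)) w"
            using v map_setp_same[OF pw, of "\<lambda>x. fst (snd x)"] A B bg by auto
          have "di v < di w" unfolding di_def using v inv_setp_gen[OF pw, of "\<lambda>x. - int (snd (snd x))"] A B lt by auto
          then have mv: "(v, w) \<in> mrel" by (rule mrel_di[OF mf mb])
          show "delta v \<in> Cl N L r {}" by (rule ok[OF mv Qv])
        qed
      qed
    qed
  qed
qed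

end


lemma kunder_kidx:
  assumes N: "1 \<le> N" and L: "1 \<le> L" and v: "ventry N L x"
  shows "kunder N L (kidx N L x) = fst x"
proof -
  obtain a \<beta> \<epsilon> where x: "x = (a, \<beta>, \<epsilon>)" by (cases x) auto
  have r: "1 \<le> \<beta>" "\<beta> \<le> L" "1 \<le> \<epsilon>" "\<epsilon> \<le> N" using v x by (auto simp: ventry_def)
  have "- kidx N L x = int N * int L * a + (int N * int \<beta> - int \<epsilon>)"
    unfolding x kidx_def by (simp add: algebra_simps)
  moreover have "0 \<le> int N * int \<beta> - int \<epsilon>"
  proof -
    have "int N * 1 \<le> int N * int \<beta>" using r by (intro mult_left_mono) auto
    moreover have "int \<epsilon> \<le> int N" using r by simp
    ultimately show ?thesis by linarith
  qed
  moreover have "int N * int \<beta> - int \<epsilon> < int N * int L"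
  proof -
    have "int N * int \<beta> \<le> int N * int L" using r by (intro mult_left_mono) auto
    moreover have "1 \<le> int \<epsilon>" using r by simp
    ultimately show ?thesis by linarith
  qed
  ultimately have "(- kidx N L x) div (int N * int L) = a"
    by (intro int_div_pos_eq[where r = "int N * int \<beta> - int \<epsilon>"]) (auto simp: algebra_simps)
  then show ?thesis using kunder_formula[OF N L] x by simp
qed

lemma kunder_anti:
  assumes N: "1 \<le> N" and L: "1 \<le> L" and "k \<le> k'"
  shows "kunder N L k' \<le> kunder N L k"
  unfolding kunder_formula[OF N L] using assms by (intro zdiv_mono1) auto

lemma normal_chain:
  assumes nv: "normal N L v" and "i \<le> j" and "j < length v"
  shows "kidx N L (v ! j) + int (j - i) \<le> kidx N L (v ! i)"
  using assms(2,3)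
proof (induction j)
  case 0 then show ?case by simp
next
  case (Suc j)
  show ?case
  proof (cases "i = Suc j")
    case True then show ?thesis by simp
  next
    case False
    then have "i \<le> j" using Suc.prems by simp
    then have "kidx N L (v ! j) + int (j - i) \<le> kidx N L (v ! i)" using Suc by simp
    moreover have "kidx N L (v ! Suc j) < kidx N L (v ! j)" using nv Suc.prems unfolding normal_def by simp
    ultimately show ?thesis using \<open>i \<le> j\<close> by (simp add: Suc_diff_le)
  qed
qed

lemma telescope: "(\<Sum>i<Suc n. f (int i) - f (int i - 1)) = f (int n) - (f (-1) :: int)"
  by (induction n) (auto simp: algebra_simps)

context
  fixes N L :: nat and M m :: int and s l n b c :: nat
  assumes N: "1 \<le> N" and L: "1 \<le> L" and sNL: "s < N * L"
    and n: "n = s + l * N * L"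
    and Mm: "M - int s - int l * int N * int L = - m * int N * int L"
    and bc1: "1 \<le> b * c" and bcNL: "b * c \<le> N * L"
begin

definition ff :: "int \<Rightarrow> int" where "ff x = (x - int s) div (int N * int L)"

lemma NLpos: "0 < int N * int L" using N L by simp

lemma kunder_oo: "kunder N L (oo M (Suc i)) = ff (int i) + m - int l"
proof -
  have "- oo M (Suc i) = (int i - int s) + (int N * int L) * (m - int l)"
    using Mm unfolding oo_def by (simp add: algebra_simps)
  moreover have "((int i - int s) + (int N * int L) * (m - int l)) div (int N * int L) = (m - int l) + (int i - int s) div (int N * int L)"
    by (rule div_mult_self2) (use N L in simp)
  ultimately have "(- oo M (Suc i)) div (int N * int L) = (int i - int s) div (int N * int L) + (m - int l)"
    by simp
  then show ?thesis unfolding kunder_formula[OF N L] ff_def by simp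
qed

lemma kunder_oo1: "kunder N L (oo M (Suc i) + 1) = ff (int i - 1) + m - int l"
proof -
  have e: "- (oo M (Suc i) + 1) = (int i - 1 - int s) + (int N * int L) * (m - int l)"
    using Mm unfolding oo_def by (simp add: algebra_simps)
  have d: "((int i - 1 - int s) + (int N * int L) * (m - int l)) div (int N * int L) = (m - int l) + (int i - 1 - int s) div (int N * int L)"
    by (rule div_mult_self2) (use N L in simp)
  show ?thesis unfolding kunder_formula[OF N L] ff_def e d by simp
qed

lemma ff_n: "ff (int n) = int l"
proof -
  have "int n - int s = int l * (int N * int L)" using n by (simp add: algebra_simps)
  moreover have "(int l * (int N * int L)) div (int N * int L) = int l"
    by (rule nonzero_mult_div_cancel_right) (use N L in simp)
  ultimately show ?thesis unfolding ff_def by simp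
qed

lemma ff_m1: "ff (-1) = -1"
proof -
  have "int s < int N * int L" using sNL by (metis of_nat_less_iff of_nat_mult)
  then show ?thesis unfolding ff_def
    by (intro int_div_pos_eq[where r = "int N * int L - 1 - int s"]) (auto simp: algebra_simps)
qed

lemma ff_ge: "n \<le> i \<Longrightarrow> int l \<le> ff (int i)"
proof -
  assume a: "n \<le> i"
  have "int n = int s + int l * (int N * int L)" using n by simp
  moreover have "int n \<le> int i" using a by simp
  ultimately have "int l * (int N * int L) \<le> int i - int s" by linarith
  then have "(int l * (int N * int L)) div (int N * int L) \<le> (int i - int s) div (int N * int L)"
    using NLpos by (intro zdiv_mono1) auto
  moreover have "(int l * (int N * int L)) div (int N * int L) = int l"
    by (rule nonzero_mult_div_cancel_right) (use N L in simp)
  ultimately show ?thesis unfolding ff_def by simp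
qed

lemma ff_mono: "x \<le> y \<Longrightarrow> ff x \<le> ff y"
  unfolding ff_def using NLpos by (intro zdiv_mono1) auto

lemma GW_good:
  assumes v: "v \<in> GW N L (n + b * c) m (b * c)"
  shows "VMr_word N L M (n + b * c) v \<and> int l < deg_word N L M v"
proof -
  let ?r = "n + b * c"
  have vv: "valid_word N L ?r v" and nv: "normal N L v" and Pv: "Pm m (b * c) v" using v by (auto simp: GW_def)
  have lv: "length v = ?r" using vv by (simp add: valid_word_def)
  have ve: "ventry N L (v ! i)" if "i < ?r" for i using valid_nth[OF vv that] .
  have fk: "fst (v ! i) = kunder N L (kidx N L (v ! i))" if "i < ?r" for i using kunder_kidx[OF N L ve[OF that]] by simp
  have le_m: "fst (v ! i) \<le> m" if "i < ?r" for i
  proof -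
    have "fst (v ! i) \<in> set (map fst v)" using that lv by simp
    then show ?thesis using Pv unfolding Pm_def by blast
  qed
  have mono: "fst (v ! i) \<le> fst (v ! j)" if "i \<le> j" "j < ?r" for i j
  proof -
    have "kidx N L (v ! j) \<le> kidx N L (v ! i)" using normal_chain[OF nv that(1)] that lv by force
    then show ?thesis using fk that kunder_anti[OF N L] by (metis le_less_trans)
  qed
  have vn: "fst (v ! n) < m"
  proof (rule ccontr)
    assume "\<not> fst (v ! n) < m"
    then have "fst (v ! n) = m" using le_m[of n] bc1 by simp
    then have all: "fst (v ! j) = m" if "n \<le> j" "j < ?r" for j using mono[OF that] le_m[OF that(2)] by simp
    have "{n..<?r} \<subseteq> {i. i < length (map fst v) \<and> map fst v ! i = m}" using all lv by auto
    then have "card {n..<?r} \<le> card {i. i < length (map fst v) \<and> map fst v ! i = m}"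
      by (intro card_mono) auto
    also have "\<dots> = length (filter (\<lambda>x. x = m) (map fst v))" by (simp add: length_filter_conv_card)
    finally show False using Pv unfolding Pm_def by simp
  qed
  have kn: "1 - int N * int L * m \<le> kidx N L (v ! n)"
  proof -
    obtain a \<beta> \<epsilon> where x: "v ! n = (a, \<beta>, \<epsilon>)" by (cases "v ! n") auto
    have r: "1 \<le> \<beta>" "\<beta> \<le> L" "1 \<le> \<epsilon>" "\<epsilon> \<le> N" using ve[of n] bc1 x by (auto simp: ventry_def)
    have am: "a \<le> m - 1" using vn x by simp
    have f1: "int N * int L * a \<le> int N * int L * (m - 1)" using am by (intro mult_left_mono) auto
    have f2: "int N * int \<beta> \<le> int N * int L" using r by (intro mult_left_mono) auto
    have f3: "int N * int L * (m - 1) = int N * int L * m - int N * int L" by (simp add: algebra_simps)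
    have f4: "kidx N L (a, \<beta>, \<epsilon>) = int \<epsilon> - int N * int \<beta> - int N * int L * a" by (simp add: kidx_def algebra_simps)
    have f5: "1 \<le> int \<epsilon>" using r by simp
    show ?thesis unfolding x f4 using f1 f2 f3 f5 by linarith
  qed
  have low: "fst (v ! i) \<le> ff (int i - 1) + m - int l" if "i \<le> n" for i
  proof -
    have "kidx N L (v ! n) + int (n - i) \<le> kidx N L (v ! i)" using normal_chain[OF nv that] lv bc1 by simp
    moreover have "oo M (Suc i) + 1 = 1 - int N * int L * m + int (n - i)"
      using Mm n that unfolding oo_def by (simp add: algebra_simps of_nat_diff)
    ultimately have "oo M (Suc i) + 1 \<le> kidx N L (v ! i)" using kn by linarith
    then have "kunder N L (kidx N L (v ! i)) \<le> kunder N L (oo M (Suc i) + 1)" by (rule kunder_anti[OF N L])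
    then show ?thesis using fk[of i] that bc1 kunder_oo1 by simp
  qed
  define tm where "tm i = kunder N L (oo M (Suc i)) - fst (v ! i)" for i
  have deg: "deg_word N L M v = (\<Sum>i<?r. tm i)" unfolding deg_word_def tm_def lv ..
  have t1: "ff (int i) - ff (int i - 1) \<le> tm i" if "i \<le> n" for i
    using low[OF that] kunder_oo[of i] unfolding tm_def by simp
  have t2: "0 \<le> tm i" if "n < i" "i < ?r" for i
    using le_m[OF that(2)] kunder_oo[of i] ff_ge[of i] that unfolding tm_def by simp
  have sn: "Suc n \<le> ?r" using bc1 by linarith
  have split: "(\<Sum>i<?r. tm i) = (\<Sum>i<Suc n. tm i) + (\<Sum>i\<in>{Suc n..<?r}. tm i)"
  proof -
    obtain k where k: "?r = Suc n + k" using le_Suc_ex[OF sn] by blast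
    have se: "{..<?r} = {..<Suc n} \<union> {Suc n..<?r}" unfolding k by auto
    show ?thesis unfolding se by (rule sum.union_disjoint) auto
  qed
  have "(\<Sum>i<Suc n. ff (int i) - ff (int i - 1)) \<le> (\<Sum>i<Suc n. tm i)"
    by (rule sum_mono) (use t1 in auto)
  moreover have "0 \<le> (\<Sum>i\<in>{Suc n..<?r}. tm i)" by (rule sum_nonneg) (use t2 in auto)
  ultimately have "ff (int n) - ff (-1) \<le> deg_word N L M v" unfolding deg split telescope by linarith
  then have dg: "int l < deg_word N L M v" using ff_n ff_m1 by simp
  have ord: "\<forall>i j. i < j \<and> j < ?r \<longrightarrow> kidx N L (v ! i) > kidx N L (v ! j)"
  proof (intro allI impI)
    fix i j assume "i < j \<and> j < ?r"
    then show "kidx N L (v ! i) > kidx N L (v ! j)" using normal_chain[OF nv, of i j] lv by simp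
  qed
  have last: "fst (v ! (?r - 1)) \<le> kunder N L (oo M ?r)"
  proof -
    have "?r = Suc (?r - 1)" using sn by simp
    then have "kunder N L (oo M ?r) = ff (int (?r - 1)) + m - int l" using kunder_oo[of "?r - 1"] by metis
    moreover have "n \<le> ?r - 1" "?r - 1 < ?r" using sn by linarith+
    moreover have "int l \<le> ff (int (?r - 1))" using ff_ge \<open>n \<le> ?r - 1\<close> by simp
    moreover have "fst (v ! (?r - 1)) \<le> m" using le_m \<open>?r - 1 < ?r\<close> by simp
    ultimately show ?thesis by simp
  qed
  show ?thesis using vv ord last dg unfolding VMr_word_def by simp
qed

end


lemma fspan_nz: assumes "f \<in> fspan S" "f u \<noteq> 0" shows "\<exists>g\<in>S. g u \<noteq> 0"
proof (rule ccontr)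
  assume "\<not> (\<exists>g\<in>S. g u \<noteq> 0)"
  then have z: "\<forall>g\<in>S. g u = 0" by blast
  obtain A c where A: "finite A" "A \<subseteq> S" "f = (\<Sum>h\<in>A. sc (c h) h)" using assms(1) unfolding fspan_def by blast
  have "f u = (\<Sum>h\<in>A. c h * h u)" unfolding A(3) sum_fun_apply by simp
  also have "\<dots> = 0" using z A(2) by (auto intro!: sum.neutral)
  finally show False using assms(2) by simp
qed

lemma fspan_supp_fin: assumes "f \<in> fspan S" "\<And>g. g \<in> S \<Longrightarrow> finite (supp g)" shows "finite (supp f)"
proof -
  obtain A c where A: "finite A" "A \<subseteq> S" "f = (\<Sum>h\<in>A. sc (c h) h)" using assms(1) unfolding fspan_def by blast
  have "supp f \<subseteq> (\<Union>h\<in>A. supp h)"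
  proof
    fix u assume "u \<in> supp f"
    then have "(\<Sum>h\<in>A. c h * h u) \<noteq> 0" unfolding A(3) supp_def sum_fun_apply by simp
    then obtain h where "h \<in> A" "c h * h u \<noteq> 0" by (meson sum.neutral)
    then show "u \<in> (\<Union>h\<in>A. supp h)" by (auto simp: supp_def)
  qed
  moreover have "finite (\<Union>h\<in>A. supp h)" using A assms(2) by auto
  ultimately show ?thesis by (rule finite_subset)
qed

definition pj :: "int \<times> nat \<times> nat \<Rightarrow> int \<times> nat" where "pj x = (case x of (m, b, e) \<Rightarrow> (m, b))"
definition pe :: "int \<times> nat \<times> nat \<Rightarrow> nat" where "pe x = (case x of (m, b, e) \<Rightarrow> e)"

lemma tprod_alt: "tprod f y w = f (map pj w) * y (map pe w)"
  unfolding tprod_def pj_def pe_def by simp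

lemma recombine: "map2 (\<lambda>(m, b) e. (m, b, e)) (map pj w) (map pe w) = w"
  by (induction w) (auto simp: pj_def pe_def split: prod.splits)

lemma finite_words:
  assumes "finite U" "finite V"
  shows "finite {w. map pj w \<in> U \<and> map pe w \<in> V}"
proof -
  have "{w. map pj w \<in> U \<and> map pe w \<in> V} \<subseteq> (\<lambda>(u, v). map2 (\<lambda>(m, b) e. (m, b, e)) u v) ` (U \<times> V)"
  proof
    fix w assume "w \<in> {w. map pj w \<in> U \<and> map pe w \<in> V}"
    then show "w \<in> (\<lambda>(u, v). map2 (\<lambda>(m, b) e. (m, b, e)) u v) ` (U \<times> V)"
      using recombine[of w] by (auto intro!: image_eqI[of _ _ "(map pj w, map pe w)"])
  qed
  moreover have "finite ((\<lambda>(u, v). map2 (\<lambda>(m, b) e. (m, b, e)) u v) ` (U \<times> V))" using assms by simp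
  ultimately show ?thesis by (rule finite_subset)
qed

lemma finite_lists: "finite {xs :: nat list. length xs = k \<and> set xs \<subseteq> {1..B}}"
  using finite_lists_length_eq[of "{1..B}" k] by (simp add: conj_commute)

lemma map_pj_fst: "map fst (map pj w) = map fst w" by (induction w) (auto simp: pj_def split: prod.splits)
lemma map_pj_snd: "map snd (map pj w) = map (\<lambda>x. fst (snd x)) w" by (induction w) (auto simp: pj_def split: prod.splits)
lemma map_pe: "map pe w = map (\<lambda>x. snd (snd x)) w" by (induction w) (auto simp: pe_def split: prod.splits)

lemma ytens_nz:
  assumes "ytens n yn eps es \<noteq> 0"
  shows "length es = n + length eps \<and> drop n es = eps \<and> yn (take n es) \<noteq> 0"
  using assms unfolding ytens_def by (auto split: if_splits)

context
  fixes N L :: nat and M m :: int and s l n b c :: nat and yn :: "nat list \<Rightarrow> K" and eps :: "nat list"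
  assumes N: "1 \<le> N" and L: "1 \<le> L" and cN: "c \<le> N"
    and yn: "yn \<in> Ntens N n" and leps: "length eps = b * c" and eps: "\<forall>e\<in>set eps. N - c + 1 \<le> e \<and> e \<le> N"
begin

lemma y_nz:
  assumes "ytens n yn eps es \<noteq> 0"
  shows "length es = n + b * c \<and> (\<forall>i < n + b * c. 1 \<le> es ! i \<and> es ! i \<le> N) \<and> (\<forall>i. n \<le> i \<and> i < n + b * c \<longrightarrow> N - c + 1 \<le> es ! i)"
proof -
  have h: "length es = n + length eps" "drop n es = eps" "yn (take n es) \<noteq> 0" using ytens_nz[OF assms] by auto
  have t: "\<forall>x\<in>set (take n es). 1 \<le> x \<and> x \<le> N" using yn h(3) unfolding Ntens_def by auto
  have a: "1 \<le> es ! i \<and> es ! i \<le> N" if "i < n + b * c" for i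
  proof (cases "i < n")
    case True
    have "i < length (take n es)" using True h(1) by simp
    then have "take n es ! i \<in> set (take n es)" by (rule nth_mem)
    then have "es ! i \<in> set (take n es)" using True by simp
    then show ?thesis using t by blast
  next
    case False
    then have "es ! i = drop n es ! (i - n)" using h(1) by simp
    then have "es ! i = eps ! (i - n)" using h(2) by simp
    moreover have "i - n < length eps" using False that leps by simp
    ultimately have "es ! i \<in> set eps" by simp
    then have "N - c + 1 \<le> es ! i \<and> es ! i \<le> N" using eps by blast
    then show ?thesis by linarith
  qed
  have bb: "N - c + 1 \<le> es ! i" if "n \<le> i" "i < n + b * c" for i
  proof -
    have "es ! i = drop n es ! (i - n)" using h(1) that by simp
    then have "es ! i = eps ! (i - n)" using h(2) by simp
    moreover have "i - n < length eps" using that leps by simp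
    ultimately have "es ! i \<in> set eps" by simp
    then show ?thesis using eps by blast
  qed
  show ?thesis using h(1) leps a bb by simp
qed

lemma es_finite: "finite {es. ytens n yn eps es \<noteq> 0}"
proof -
  have "{es. ytens n yn eps es \<noteq> 0} \<subseteq> {xs. length xs = n + b * c \<and> set xs \<subseteq> {1..N}}"
  proof
    fix es assume "es \<in> {es. ytens n yn eps es \<noteq> 0}"
    then have "length es = n + b * c \<and> (\<forall>i < n + b * c. 1 \<le> es ! i \<and> es ! i \<le> N)" using y_nz by blast
    then show "es \<in> {xs. length xs = n + b * c \<and> set xs \<subseteq> {1..N}}" by (auto simp: in_set_conv_nth)
  qed
  then show ?thesis using finite_lists by (rule finite_subset)
qed

lemma tprod_finite: "finite (supp f) \<Longrightarrow> finite (supp (tprod f (ytens n yn eps)))"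
proof -
  assume f: "finite (supp f)"
  have "supp (tprod f (ytens n yn eps)) \<subseteq> {w. map pj w \<in> supp f \<and> map pe w \<in> {es. ytens n yn eps es \<noteq> 0}}"
    by (auto simp: supp_def tprod_alt)
  then show ?thesis using finite_words[OF f es_finite] by (rule finite_subset)
qed

lemma gen_finite:
  assumes "length ms = k" "E \<in> Ltens L k"
  shows "finite (supp (\<lambda>u. if map fst u = ms then E (map snd u) else (0::K)))"
proof -
  have "supp (\<lambda>u. if map fst u = ms then E (map snd u) else 0) \<subseteq> (\<lambda>bs. zip ms bs) ` {xs. length xs = k \<and> set xs \<subseteq> {1..L}}"
  proof
    fix u assume "u \<in> supp (\<lambda>u. if map fst u = ms then E (map snd u) else 0)"
    then have u: "map fst u = ms" "E (map snd u) \<noteq> 0" by (auto simp: supp_def split: if_splits)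
    then have h: "length (map snd u) = k \<and> (\<forall>x\<in>set (map snd u). 1 \<le> x \<and> x \<le> L)" using assms(2) unfolding Ltens_def by blast
    then have "length (map snd u) = k \<and> set (map snd u) \<subseteq> {1..L}" by auto
    moreover have "u = zip ms (map snd u)" using u(1) zip_map_fst_snd[of u] by simp
    ultimately show "u \<in> (\<lambda>bs. zip ms bs) ` {xs. length xs = k \<and> set xs \<subseteq> {1..L}}" by blast
  qed
  then show ?thesis by (rule finite_subset) (rule finite_imageI[OF finite_lists])
qed

end


lemma nth_map_pj: "i < length w \<Longrightarrow> map pj w ! i = (fst (w ! i), fst (snd (w ! i)))"
  by (simp add: pj_def split: prod.splits)
lemma nth_map_pe: "i < length w \<Longrightarrow> map pe w ! i = snd (snd (w ! i))"
  by (simp add: pe_def split: prod.splits)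

lemma valid_from_lists:
  assumes "length w = r" "\<And>i. i < r \<Longrightarrow> 1 \<le> fst (snd (w ! i)) \<and> fst (snd (w ! i)) \<le> L"
    "\<And>i. i < r \<Longrightarrow> 1 \<le> snd (snd (w ! i)) \<and> snd (snd (w ! i)) \<le> N"
  shows "valid_word N L r w"
  unfolding valid_word_iff
proof (intro conjI ballI)
  show "length w = r" by (rule assms(1))
  fix x assume "x \<in> set w"
  then obtain i where "i < r" "x = w ! i" using assms(1) by (metis in_set_conv_nth)
  then show "ventry N L x" using assms(2,3) by (simp add: ventry_def)
qed

lemma Cl_of_supp:
  assumes "finite (supp f)" "\<And>w. w \<in> supp f \<Longrightarrow> delta w \<in> Cl N L r S"
  shows "f \<in> Cl N L r S"
  using Cl_trans[OF assms(2) Cl_fin[OF assms(1) order_refl]] by blast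

context
  fixes N L :: nat and M m :: int and s l n b c :: nat and yn :: "nat list \<Rightarrow> K" and eps :: "nat list"
  assumes N: "1 \<le> N" and L: "1 \<le> L" and sNL: "s < N * L"
    and n: "n = s + l * N * L"
    and Mm: "M - int s - int l * int N * int L = - m * int N * int L"
    and b1: "1 \<le> b" and bL: "b \<le> L" and c1: "1 \<le> c" and cN: "c \<le> N"
    and yn: "yn \<in> Ntens N n" and leps: "length eps = b * c" and eps: "\<forall>e\<in>set eps. N - c + 1 \<le> e \<and> e \<le> N"
begin

lemma bc1: "1 \<le> b * c" using mult_le_mono[OF b1 c1] by simp
lemma bcNL: "b * c \<le> N * L" using bL cN by (metis mult.commute mult_le_mono)

lemma part1:
  assumes f1: "f1 \<in> calK L n m b c"
  shows "tprod f1 (ytens n yn eps) \<in> Cl N L (n + b * c) (GW N L (n + b * c) m (b * c))"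
proof -
  let ?r = "n + b * c"
  let ?y = "ytens n yn eps"
  have ff1: "finite (supp f1)"
    by (rule fspan_supp_fin[OF f1[unfolded calK_def]]) (auto intro: gen_finite[OF N L cN yn leps eps])
  show ?thesis
  proof (rule Cl_of_supp[OF tprod_finite[OF N L cN yn leps eps ff1]])
    fix w assume "w \<in> supp (tprod f1 ?y)"
    then have nz1: "f1 (map pj w) \<noteq> 0" and nz2: "?y (map pe w) \<noteq> 0" by (auto simp: supp_def tprod_alt)
    obtain g where g: "g \<in> {(\<lambda>u. if map fst u = ms then E (map snd u) else 0) | ms E.
      length ms = n + b * c \<and> E \<in> Ltens L (n + b * c) \<and> (\<forall>x\<in>set ms. x \<le> m) \<and>
      card {i. i < n + b * c \<and> ms ! i = m} < b * c}" and gnz: "g (map pj w) \<noteq> 0"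
      using fspan_nz[OF f1[unfolded calK_def] nz1] by blast
    then obtain ms E where gdef: "g = (\<lambda>u. if map fst u = ms then E (map snd u) else 0)"
      and ms: "length ms = ?r" "E \<in> Ltens L ?r" "\<forall>x\<in>set ms. x \<le> m" "card {i. i < ?r \<and> ms ! i = m} < b * c"
      by blast
    have mfw: "map fst w = ms" and Enz: "E (map (\<lambda>x. fst (snd x)) w) \<noteq> 0"
      using gnz unfolding gdef map_pj_fst map_pj_snd by (auto split: if_splits)
    have Eh: "length (map (\<lambda>x. fst (snd x)) w) = ?r \<and> (\<forall>x\<in>set (map (\<lambda>x. fst (snd x)) w). 1 \<le> x \<and> x \<le> L)"
      using ms(2) Enz unfolding Ltens_def by blast
    have lw: "length w = ?r" using Eh by simp
    have yh: "length (map pe w) = ?r \<and> (\<forall>i < ?r. 1 \<le> map pe w ! i \<and> map pe w ! i \<le> N)"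
      using y_nz[OF N L cN yn leps eps nz2] by blast
    have vw: "valid_word N L ?r w"
    proof (rule valid_from_lists[OF lw])
      fix i assume i: "i < ?r"
      have "fst (snd (w ! i)) \<in> set (map (\<lambda>x. fst (snd x)) w)" using i lw by simp
      then show "1 \<le> fst (snd (w ! i)) \<and> fst (snd (w ! i)) \<le> L" using Eh by blast
    next
      fix i assume i: "i < ?r"
      have e1: "1 \<le> map pe w ! i \<and> map pe w ! i \<le> N" using yh i by blast
      then show "1 \<le> snd (snd (w ! i)) \<and> snd (snd (w ! i)) \<le> N" using nth_map_pe[of i w] i lw by simp
    qed
    have Pw: "Pm m (b * c) w"
    proof -
      have "length (filter (\<lambda>x. x = m) ms) = card {i. i < length ms \<and> ms ! i = m}"
        by (simp add: length_filter_conv_card)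
      then show ?thesis unfolding Pm_def mfw using ms by simp
    qed
    show "delta w \<in> Cl N L ?r (GW N L ?r m (b * c))" by (rule straighten[OF N L vw Pw])
  qed
qed

lemma part2:
  assumes f2: "f2 \<in> calL L n m b c"
  shows "tprod f2 (ytens n yn eps) \<in> rel_space N L (n + b * c)"
proof -
  let ?r = "n + b * c"
  let ?y = "ytens n yn eps"
  have ff2: "finite (supp f2)"
    by (rule fspan_supp_fin[OF f2[unfolded calL_def]]) (auto simp: supp_delta)
  have "tprod f2 ?y \<in> Cl N L ?r {}"
  proof (rule Cl_of_supp[OF tprod_finite[OF N L cN yn leps eps ff2]])
    fix w assume "w \<in> supp (tprod f2 ?y)"
    then have nz1: "f2 (map pj w) \<noteq> 0" and nz2: "?y (map pe w) \<noteq> 0" by (auto simp: supp_def tprod_alt)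
    obtain g where g: "g \<in> {delta u | u. length u = n + b * c \<and>
      (\<forall>x\<in>set u. 1 \<le> snd x \<and> snd x \<le> L) \<and>
      (\<forall>i < n. fst (u ! i) < m) \<and> (\<forall>i. n \<le> i \<and> i < n + b * c \<longrightarrow> fst (u ! i) = m) \<and>
      (\<exists>j < b. c < card {i. 1 \<le> i \<and> i \<le> b * c \<and> snd (u ! (n + i - 1)) = j})}" and gnz: "g (map pj w) \<noteq> 0"
      using fspan_nz[OF f2[unfolded calL_def] nz1] by blast
    then obtain u where gdef: "g = delta u" and u: "length u = ?r" "\<forall>x\<in>set u. 1 \<le> snd x \<and> snd x \<le> L"
      "\<forall>i. n \<le> i \<and> i < ?r \<longrightarrow> fst (u ! i) = m"
      "\<exists>j < b. c < card {i. 1 \<le> i \<and> i \<le> b * c \<and> snd (u ! (n + i - 1)) = j}" by blast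
    have uw: "map pj w = u" using gnz unfolding gdef by (auto simp: delta_def split: if_splits)
    have lw: "length w = ?r" using u(1) uw by (metis length_map)
    have un: "u ! i = (fst (w ! i), fst (snd (w ! i)))" if "i < ?r" for i using nth_map_pj[of i w] that lw uw by simp
    obtain j where j: "c < card {i. 1 \<le> i \<and> i \<le> b * c \<and> snd (u ! (n + i - 1)) = j}" using u(4) by blast
    have yh: "length (map pe w) = ?r \<and> (\<forall>i < ?r. 1 \<le> map pe w ! i \<and> map pe w ! i \<le> N) \<and>
        (\<forall>i. n \<le> i \<and> i < ?r \<longrightarrow> N - c + 1 \<le> map pe w ! i)"
      using y_nz[OF N L cN yn leps eps nz2] by blast
    have vw: "valid_word N L ?r w"
    proof (rule valid_from_lists[OF lw])
      fix i assume i: "i < ?r"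
      have "u ! i \<in> set u" using i u(1) by simp
      then show "1 \<le> fst (snd (w ! i)) \<and> fst (snd (w ! i)) \<le> L" using u(2) un[OF i] by auto
    next
      fix i assume i: "i < ?r"
      have e1: "1 \<le> map pe w ! i \<and> map pe w ! i \<le> N" using yh i by blast
      then show "1 \<le> snd (snd (w ! i)) \<and> snd (snd (w ! i)) \<le> N" using nth_map_pe[of i w] i lw by simp
    qed
    have card_eq: "card {i. n \<le> i \<and> i < ?r \<and> fst (snd (w ! i)) = j} = card {i. 1 \<le> i \<and> i \<le> b * c \<and> snd (u ! (n + i - 1)) = j}"
    proof -
      have "{i. n \<le> i \<and> i < ?r \<and> fst (snd (w ! i)) = j} = (\<lambda>i. n + i - 1) ` {i. 1 \<le> i \<and> i \<le> b * c \<and> snd (u ! (n + i - 1)) = j}"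
      proof
        show "{i. n \<le> i \<and> i < ?r \<and> fst (snd (w ! i)) = j} \<subseteq> (\<lambda>i. n + i - 1) ` {i. 1 \<le> i \<and> i \<le> b * c \<and> snd (u ! (n + i - 1)) = j}"
        proof
          fix i assume i: "i \<in> {i. n \<le> i \<and> i < ?r \<and> fst (snd (w ! i)) = j}"
          then have "i - n + 1 \<in> {i. 1 \<le> i \<and> i \<le> b * c \<and> snd (u ! (n + i - 1)) = j}" using un by auto
          moreover have "i = n + (i - n + 1) - 1" using i by simp
          ultimately show "i \<in> (\<lambda>i. n + i - 1) ` {i. 1 \<le> i \<and> i \<le> b * c \<and> snd (u ! (n + i - 1)) = j}" by blast
        qed
      next
        show "(\<lambda>i. n + i - 1) ` {i. 1 \<le> i \<and> i \<le> b * c \<and> snd (u ! (n + i - 1)) = j} \<subseteq> {i. n \<le> i \<and> i < ?r \<and> fst (snd (w ! i)) = j}"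
        proof
          fix k assume "k \<in> (\<lambda>i. n + i - 1) ` {i. 1 \<le> i \<and> i \<le> b * c \<and> snd (u ! (n + i - 1)) = j}"
          then obtain i where i: "1 \<le> i" "i \<le> b * c" "snd (u ! (n + i - 1)) = j" and k: "k = n + i - 1" by blast
          have "k < ?r" "n \<le> k" using i k by auto
          then show "k \<in> {i. n \<le> i \<and> i < ?r \<and> fst (snd (w ! i)) = j}" using i(3) k un by auto
        qed
      qed
      moreover have "inj_on (\<lambda>i. n + i - 1) {i. 1 \<le> i \<and> i \<le> b * c \<and> snd (u ! (n + i - 1)) = j}"
        by (rule inj_onI) auto
      ultimately show ?thesis by (simp add: card_image)
    qed
    have Q: "Qb N L ?r n m c j w"
      unfolding Qb_def
    proof (intro conjI allI impI)
      show "valid_word N L ?r w" by (rule vw)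
      show "n \<le> ?r" by simp
      fix i assume i: "n \<le> i \<and> i < ?r"
      show "fst (w ! i) = m" using u(3) i un by auto
    next
      fix i assume i: "n \<le> i \<and> i < ?r"
      have e1: "N - c + 1 \<le> map pe w ! i" using yh i by blast
      then show "N - c + 1 \<le> snd (snd (w ! i))" using nth_map_pe[of i w] i lw by simp
    next
      show "c < card {i. n \<le> i \<and> i < ?r \<and> fst (snd (w ! i)) = j}" using j card_eq by simp
    qed
    show "delta w \<in> Cl N L ?r {}" by (rule block_zero[OF N L cN Q])
  qed
  then show ?thesis by (rule Cl_empty)
qed

end

theorem mainTheorem16:
  fixes N L :: nat and M m :: int and s l d n b c :: nat
    and f1 f2 :: "(int \<times> nat) list \<Rightarrow> K" and yn :: "nat list \<Rightarrow> K" and eps :: "nat list"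
  assumes "1 \<le> N" and "1 \<le> L"
    and "s < N * L" and "(M - int s) mod int (N * L) = 0"
    and "d \<le> l" and "n = s + l * N * L"
    and "M - int s - int l * int N * int L = - m * int N * int L"
    and "1 \<le> b" and "b \<le> L" and "1 \<le> c" and "c \<le> N"
    and "yn \<in> Ntens N n"
    and "length eps = b * c" and "\<forall>e\<in>set eps. N - c + 1 \<le> e \<and> e \<le> N"
    and "f1 \<in> calK L n m b c" and "f2 \<in> calL L n m b c"
  shows "wedge_in_high_deg N L M (n + b * c) l (tprod f1 (ytens n yn eps)) \<and>
         tprod f2 (ytens n yn eps) \<in> rel_space N L (n + b * c)"
proof
  note ctx = assms(1,2,3,6,7,8,9,10,11,12,13,14)
  have bc1: "1 \<le> b * c" by (rule bc1[OF ctx])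
  have bcNL: "b * c \<le> N * L" by (rule bcNL[OF ctx])
  have "tprod f1 (ytens n yn eps) \<in> Cl N L (n + b * c) (GW N L (n + b * c) m (b * c))"
    by (rule part1[OF ctx assms(15)])
  then obtain g where g: "g \<in> fspan (delta ` GW N L (n + b * c) m (b * c))"
    "tprod f1 (ytens n yn eps) - g \<in> rel_space N L (n + b * c)" unfolding Cl_def by blast
  have "delta ` GW N L (n + b * c) m (b * c) \<subseteq> {delta w | w. VMr_word N L M (n + b * c) w \<and> int l < deg_word N L M w}"
    using GW_good[OF assms(1,2,3,6,7) bc1 bcNL] by blast
  then have "g \<in> fspan {delta w | w. VMr_word N L M (n + b * c) w \<and> int l < deg_word N L M w}"
    using fspan_mono g(1) by blast
  then show "wedge_in_high_deg N L M (n + b * c) l (tprod f1 (ytens n yn eps))"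
    unfolding wedge_in_high_deg_def using g(2) by blast
next
  note ctx = assms(1,2,3,6,7,8,9,10,11,12,13,14)
  show "tprod f2 (ytens n yn eps) \<in> rel_space N L (n + b * c)" by (rule part2[OF ctx assms(16)])
qed


end
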